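(* Let $\Omega\subset\mathbb{R}^2$ be open and $\gamma:\Omega\to\mathbb{R}^2$ a smooth map satisfying $\gamma_{,tt}=\gamma_{,ss}$, $\langle\gamma_{,t},\gamma_{,s}\rangle = 0$ and $|\gamma_{,t}|^2+|\gamma_{,s}|^2=1$, and let $\mathcal{S}$ be the ``timelike maximal'' surface $\{(t,\gamma(t,s))\}\subset\mathbb{R}^{1+2}$. Suppose $(t_0,s_0)\in\Omega$ satisfies $\gamma_{,s}(t_0,s_0)=0$ and $\gamma_{,ts}(t_0,s_0)\neq0$. Then locally around $(t_0,s_0)$ the singularities of $\mathcal{S}$ (the points where $\gamma_{,s}=0$) lie along the null curve $s\mapsto(T(s),\gamma(T(s),s))$, where $T$ solves \[ T'(s) = -\frac{\langle\gamma_{,ss}(T(s),s),\gamma_{,ts}(T(s),s)\rangle}{|\gamma_{,ts}(T(s),s)|^2},\qquad T(s_0)=t_0. \] Furthermore, if $\gamma_{,ss}(t_0,s_0)=0$ and $\gamma_{,sss}(t_0,s_0)\neq0$, then these singularities are cusps (except possibly $\gamma(t_0,s_0)$), and the curve $s\mapsto(T(s),\gamma(T(s),s))$ lies entirely in the past of $t_0$ if $\langle\gamma_{,sss},\gamma_{,ts}\rangle(t_0,s_0)>0$ and entirely in the future if $\langle\gamma_{,sss},\gamma_{,ts}\rangle(t_0,s_0)<0$, and it splits into two null curves which join together at $(t_0,\gamma(t_0,s_0))$ as a cusp.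
   Context: $\mathbb{R}^{1+2}$ is Minkowski space with metric $-dt^2+|dx|^2$; subscripts after commas denote partial derivatives; $\langle\cdot,\cdot\rangle$ is the Euclidean inner product on $\mathbb{R}^2$. *)

theory Defs
  imports "HOL-Analysis.Analysis"
begin

definition pt :: "(real \<times> real \<Rightarrow> 'a::real_normed_vector) \<Rightarrow> real \<times> real \<Rightarrow> 'a" where
  "pt f = (\<lambda>(t,s). vector_derivative (\<lambda>\<tau>. f (\<tau>,s)) (at t))"

definition ps :: "(real \<times> real \<Rightarrow> 'a::real_normed_vector) \<Rightarrow> real \<times> real \<Rightarrow> 'a" where
  "ps f = (\<lambda>(t,s). vector_derivative (\<lambda>\<sigma>. f (t,\<sigma>)) (at s))"

text \<open>Iterated partial derivative: True = d/dt, False = d/ds (applied right to left).\<close>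
fun pdiff :: "bool list \<Rightarrow> (real \<times> real \<Rightarrow> 'a::real_normed_vector) \<Rightarrow> real \<times> real \<Rightarrow> 'a" where
  "pdiff [] f = f"
| "pdiff (b # bs) f = (if b then pt else ps) (pdiff bs f)"

definition C_inf_on :: "(real \<times> real) set \<Rightarrow> (real \<times> real \<Rightarrow> 'a::real_normed_vector) \<Rightarrow> bool" where
  "C_inf_on \<Omega> f \<longleftrightarrow> (\<forall>bs. continuous_on \<Omega> (pdiff bs f) \<and>
      (\<forall>t s. (t,s) \<in> \<Omega> \<longrightarrow> (\<lambda>\<tau>. pdiff bs f (\<tau>,s)) differentiable (at t)
                         \<and> (\<lambda>\<sigma>. pdiff bs f (t,\<sigma>)) differentiable (at s)))"

definition vd :: "(real \<Rightarrow> 'a::real_normed_vector) \<Rightarrow> real \<Rightarrow> 'a" where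
  "vd f = (\<lambda>x. vector_derivative f (at x))"

definition smooth1_on :: "real set \<Rightarrow> (real \<Rightarrow> 'a::real_normed_vector) \<Rightarrow> bool" where
  "smooth1_on I f \<longleftrightarrow> (\<forall>n. \<forall>x\<in>I. ((vd ^^ n) f) differentiable (at x))"

definition mink :: "real \<times> (real^2) \<Rightarrow> real" where
  "mink v = - (fst v)\<^sup>2 + (norm (snd v))\<^sup>2"

definition lin_indep2 :: "'a::real_vector \<Rightarrow> 'a \<Rightarrow> bool" where
  "lin_indep2 u v \<longleftrightarrow> (\<forall>a b. a *\<^sub>R u + b *\<^sub>R v = 0 \<longrightarrow> a = 0 \<and> b = 0)"

text \<open>Ordinary cusp of the plane curve s \<mapsto> gamma(t,s) at parameter s (time slice of the surface).\<close>
definition slice_cusp :: "(real \<times> real \<Rightarrow> real^2) \<Rightarrow> real \<Rightarrow> real \<Rightarrow> bool" where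
  "slice_cusp \<gamma> t s \<longleftrightarrow> ps \<gamma> (t,s) = 0 \<and> lin_indep2 (ps (ps \<gamma>) (t,s)) (ps (ps (ps \<gamma>)) (t,s))"

definition curve_cusp :: "(real \<Rightarrow> 'a::real_normed_vector) \<Rightarrow> real \<Rightarrow> bool" where
  "curve_cusp c s \<longleftrightarrow> vd c s = 0 \<and> lin_indep2 (vd (vd c) s) (vd (vd (vd c)) s)"

end

theory Submission
  imports Defs
begin


lemma pt_at: "pt f (t,s) = vector_derivative (\<lambda>\<tau>. f (\<tau>,s)) (at t)"
  by (simp add: pt_def)
lemma ps_at: "ps f (t,s) = vector_derivative (\<lambda>\<sigma>. f (t,\<sigma>)) (at s)"
  by (simp add: ps_def)

lemma pt_deriv:
  fixes f :: "real \<times> real \<Rightarrow> real"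
  assumes "(\<lambda>\<tau>. f (\<tau>,s)) differentiable at t"
  shows "((\<lambda>\<tau>. f (\<tau>,s)) has_real_derivative pt f (t,s)) (at t)"
  using vector_derivative_works[THEN iffD1, OF assms]
  by (simp add: pt_at has_real_derivative_iff_has_vector_derivative)

lemma ps_deriv:
  fixes f :: "real \<times> real \<Rightarrow> real"
  assumes "(\<lambda>\<sigma>. f (t,\<sigma>)) differentiable at s"
  shows "((\<lambda>\<sigma>. f (t,\<sigma>)) has_real_derivative ps f (t,s)) (at s)"
  using vector_derivative_works[THEN iffD1, OF assms]
  by (simp add: ps_at has_real_derivative_iff_has_vector_derivative)

lemma pt_eqI:
  fixes f :: "real \<times> real \<Rightarrow> real"
  assumes "((\<lambda>\<tau>. f (\<tau>,s)) has_real_derivative D) (at t)"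
  shows "pt f (t,s) = D"
  using assms by (simp add: pt_at has_real_derivative_iff_has_vector_derivative vector_derivative_at)

lemma ps_eqI:
  fixes f :: "real \<times> real \<Rightarrow> real"
  assumes "((\<lambda>\<sigma>. f (t,\<sigma>)) has_real_derivative D) (at s)"
  shows "ps f (t,s) = D"
  using assms by (simp add: ps_at has_real_derivative_iff_has_vector_derivative vector_derivative_at)

lemma open_slice_t: "open W \<Longrightarrow> open {\<tau>. (\<tau>,s) \<in> W}"
  by (rule open_vimage[of W "\<lambda>\<tau>. (\<tau>,s)", simplified vimage_def]) (auto intro!: continuous_intros)
lemma open_slice_s: "open W \<Longrightarrow> open {\<sigma>. (t,\<sigma>) \<in> W}"
  by (rule open_vimage[of W "\<lambda>\<sigma>. (t,\<sigma>)", simplified vimage_def]) (auto intro!: continuous_intros)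

lemma pt_cong:
  assumes "open W" "\<And>p. p \<in> W \<Longrightarrow> f p = g p" "(t,s) \<in> W"
  shows "pt f (t,s) = pt g (t,s)"
proof -
  have "eventually (\<lambda>x. x \<in> UNIV \<longrightarrow> f (x,s) = g (x,s)) (nhds t)"
    using open_slice_t[OF assms(1), of s] assms(2,3) by (auto simp: eventually_nhds intro!: exI[of _ "{\<tau>. (\<tau>,s) \<in> W}"])
  from vector_derivative_cong_eq[OF this refl refl] show ?thesis by (simp add: pt_at)
qed

lemma ps_cong:
  assumes "open W" "\<And>p. p \<in> W \<Longrightarrow> f p = g p" "(t,s) \<in> W"
  shows "ps f (t,s) = ps g (t,s)"
proof -
  have "eventually (\<lambda>x. x \<in> UNIV \<longrightarrow> f (t,x) = g (t,x)) (nhds s)"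
    using open_slice_s[OF assms(1), of t] assms(2,3) by (auto simp: eventually_nhds intro!: exI[of _ "{\<sigma>. (t,\<sigma>) \<in> W}"])
  from vector_derivative_cong_eq[OF this refl refl] show ?thesis by (simp add: ps_at)
qed

lemma dt_cong:
  assumes "open W" "\<And>p. p \<in> W \<Longrightarrow> f p = g p" "(t,s) \<in> W" "(\<lambda>\<tau>. f (\<tau>,s)) differentiable at t"
  shows "(\<lambda>\<tau>. g (\<tau>,s)) differentiable at t"
proof -
  from assms(4) obtain D where D: "((\<lambda>\<tau>. f (\<tau>,s)) has_derivative D) (at t)" by (auto simp: differentiable_def)
  have "((\<lambda>\<tau>. g (\<tau>,s)) has_derivative D) (at t)"
    by (rule has_derivative_transform_within_open[OF D open_slice_t[OF assms(1)]]) (use assms in auto)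
  then show ?thesis by (auto simp: differentiable_def)
qed

lemma ds_cong:
  assumes "open W" "\<And>p. p \<in> W \<Longrightarrow> f p = g p" "(t,s) \<in> W" "(\<lambda>\<sigma>. f (t,\<sigma>)) differentiable at s"
  shows "(\<lambda>\<sigma>. g (t,\<sigma>)) differentiable at s"
proof -
  from assms(4) obtain D where D: "((\<lambda>\<sigma>. f (t,\<sigma>)) has_derivative D) (at s)" by (auto simp: differentiable_def)
  have "((\<lambda>\<sigma>. g (t,\<sigma>)) has_derivative D) (at s)"
    by (rule has_derivative_transform_within_open[OF D open_slice_s[OF assms(1)]]) (use assms in auto)
  then show ?thesis by (auto simp: differentiable_def)
qed


type_synonym rfun = "real \<times> real \<Rightarrow> real"

definition pdiffable :: "(real \<times> real) set \<Rightarrow> rfun \<Rightarrow> bool" where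
  "pdiffable W f \<longleftrightarrow> (\<forall>t s. (t,s) \<in> W \<longrightarrow> (\<lambda>\<tau>. f (\<tau>,s)) differentiable at t \<and> (\<lambda>\<sigma>. f (t,\<sigma>)) differentiable at s)"

primrec Ck :: "nat \<Rightarrow> (real \<times> real) set \<Rightarrow> rfun \<Rightarrow> bool" where
  "Ck 0 W f = continuous_on W f"
| "Ck (Suc k) W f = (continuous_on W f \<and> pdiffable W f \<and> Ck k W (pt f) \<and> Ck k W (ps f))"

declare Ck.simps(2)[simp del]
lemma Ck_SucD: "Ck (Suc k) W f \<Longrightarrow> continuous_on W f \<and> pdiffable W f \<and> Ck k W (pt f) \<and> Ck k W (ps f)"
  by (simp add: Ck.simps(2))
lemma Ck_SucI: "continuous_on W f \<Longrightarrow> pdiffable W f \<Longrightarrow> Ck k W (pt f) \<Longrightarrow> Ck k W (ps f) \<Longrightarrow> Ck (Suc k) W f"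
  by (simp add: Ck.simps(2))

definition Cinf :: "(real \<times> real) set \<Rightarrow> rfun \<Rightarrow> bool" where
  "Cinf W f \<longleftrightarrow> (\<forall>k. Ck k W f)"

lemma Ck_cont: "Ck k W f \<Longrightarrow> continuous_on W f"
  by (cases k) (auto dest: Ck_SucD)

lemma Ck_mono: "Ck (Suc k) W f \<Longrightarrow> Ck k W f"
proof (induction k arbitrary: f)
  case 0 then show ?case by (auto dest: Ck_SucD)
next
  case (Suc k)
  have a: "Ck (Suc k) W (pt f)" "Ck (Suc k) W (ps f)" using Ck_SucD[OF Suc.prems] by simp_all
  show ?case using Ck_SucD[OF Suc.prems] Suc.IH[OF a(1)] Suc.IH[OF a(2)] by (intro Ck_SucI) simp_all
qed

lemma pdiffable_cong:
  assumes "open W" "\<And>p. p \<in> W \<Longrightarrow> f p = g p" "pdiffable W f" shows "pdiffable W g"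
  unfolding pdiffable_def
proof (intro allI impI conjI)
  fix t s assume ts: "(t,s) \<in> W"
  show "(\<lambda>\<tau>. g (\<tau>,s)) differentiable at t"
    by (rule dt_cong[OF assms(1,2) ts]) (use assms(3) ts in \<open>auto simp: pdiffable_def\<close>)
  show "(\<lambda>\<sigma>. g (t,\<sigma>)) differentiable at s"
    by (rule ds_cong[OF assms(1,2) ts]) (use assms(3) ts in \<open>auto simp: pdiffable_def\<close>)
qed

lemma Ck_cong:
  assumes "open W" shows "(\<And>p. p \<in> W \<Longrightarrow> f p = g p) \<Longrightarrow> Ck k W f \<Longrightarrow> Ck k W g"
proof (induction k arbitrary: f g)
  case 0 then show ?case using continuous_on_cong[OF refl, of W f g] by simp
next
  case (Suc k)
  note F = Ck_SucD[OF Suc.prems(2)]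
  have c: "continuous_on W g" using F continuous_on_cong[OF refl, of W f g] Suc.prems(1) by simp
  have d: "pdiffable W g" using F pdiffable_cong[OF assms(1), of f g] Suc.prems(1) by blast
  have "Ck k W (pt g)"
    by (rule Suc.IH[of "pt f"]) (use F pt_cong[OF assms(1), of f g] Suc.prems(1) in auto)
  moreover have "Ck k W (ps g)"
    by (rule Suc.IH[of "ps f"]) (use F ps_cong[OF assms(1), of f g] Suc.prems(1) in auto)
  ultimately show ?case using c d by (intro Ck_SucI)
qed

lemma Cinf_cong: "open W \<Longrightarrow> (\<And>p. p \<in> W \<Longrightarrow> f p = g p) \<Longrightarrow> Cinf W f \<Longrightarrow> Cinf W g"
  unfolding Cinf_def using Ck_cong by blast

lemma Cinf_pt: "Cinf W f \<Longrightarrow> Cinf W (pt f)"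
  unfolding Cinf_def by (metis Ck_SucD)
lemma Cinf_ps: "Cinf W f \<Longrightarrow> Cinf W (ps f)"
  unfolding Cinf_def by (metis Ck_SucD)
lemma Cinf_cont: "Cinf W f \<Longrightarrow> continuous_on W f"
  unfolding Cinf_def by (metis Ck.simps(1))
lemma Cinf_pdiffable: "Cinf W f \<Longrightarrow> pdiffable W f"
  unfolding Cinf_def by (metis Ck_SucD)
lemma Cinf_dt: "Cinf W f \<Longrightarrow> (t,s) \<in> W \<Longrightarrow> (\<lambda>\<tau>. f (\<tau>,s)) differentiable at t"
  using Cinf_pdiffable pdiffable_def by blast
lemma Cinf_ds: "Cinf W f \<Longrightarrow> (t,s) \<in> W \<Longrightarrow> (\<lambda>\<sigma>. f (t,\<sigma>)) differentiable at s"
  using Cinf_pdiffable pdiffable_def by blast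

lemma Ck_subset: "V \<subseteq> W \<Longrightarrow> Ck k W f \<Longrightarrow> Ck k V f"
proof (induction k arbitrary: f)
  case 0 then show ?case by (auto intro: continuous_on_subset)
next
  case (Suc k)
  note F = Ck_SucD[OF Suc.prems(2)]
  show ?case using F Suc.IH[OF Suc.prems(1)] Suc.prems(1)
    by (intro Ck_SucI) (auto simp: pdiffable_def intro: continuous_on_subset)
qed
lemma Cinf_subset: "Cinf W f \<Longrightarrow> V \<subseteq> W \<Longrightarrow> Cinf V f"
  by (auto simp: Cinf_def Ck_subset)

lemma pt_const [simp]: "pt (\<lambda>p. c::real) = (\<lambda>p. 0)"
  by (auto simp: pt_def)
lemma ps_const [simp]: "ps (\<lambda>p. c::real) = (\<lambda>p. 0)"
  by (auto simp: ps_def)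
lemma pt_fst [simp]: "pt (fst :: real \<times> real \<Rightarrow> real) = (\<lambda>p. 1)"
proof
  fix p :: "real \<times> real" obtain t s where p: "p = (t,s)" by fastforce
  show "pt fst p = 1" unfolding p by (rule pt_eqI) (auto intro!: derivative_eq_intros)
qed
lemma ps_fst [simp]: "ps (fst :: real \<times> real \<Rightarrow> real) = (\<lambda>p. 0)"
proof
  fix p :: "real \<times> real" obtain t s where p: "p = (t,s)" by fastforce
  show "ps fst p = 0" unfolding p by (rule ps_eqI) (auto intro!: derivative_eq_intros)
qed
lemma pt_snd [simp]: "pt (snd :: real \<times> real \<Rightarrow> real) = (\<lambda>p. 0)"
proof
  fix p :: "real \<times> real" obtain t s where p: "p = (t,s)" by fastforce
  show "pt snd p = 0" unfolding p by (rule pt_eqI) (auto intro!: derivative_eq_intros)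
qed
lemma ps_snd [simp]: "ps (snd :: real \<times> real \<Rightarrow> real) = (\<lambda>p. 1)"
proof
  fix p :: "real \<times> real" obtain t s where p: "p = (t,s)" by fastforce
  show "ps snd p = 1" unfolding p by (rule ps_eqI) (auto intro!: derivative_eq_intros)
qed

lemma Ck_const: "Ck k W (\<lambda>p. c)"
  by (induction k arbitrary: c) (auto simp: pdiffable_def intro!: Ck_SucI)
lemma Cinf_const: "Cinf W (\<lambda>p. c)"
  by (simp add: Cinf_def Ck_const)
lemma Cinf_fst: "Cinf W fst"
  unfolding Cinf_def
proof
  fix k show "Ck k W fst"
    by (cases k) (auto simp: Ck_const pdiffable_def intro!: continuous_intros Ck_SucI)
qed
lemma Cinf_snd: "Cinf W snd"
  unfolding Cinf_def
proof
  fix k show "Ck k W snd"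
    by (cases k) (auto simp: Ck_const pdiffable_def intro!: continuous_intros Ck_SucI)
qed

lemma pdiffable_add: "pdiffable W f \<Longrightarrow> pdiffable W g \<Longrightarrow> pdiffable W (\<lambda>p. f p + g p)"
  by (auto simp: pdiffable_def)
lemma pdiffable_mult: "pdiffable W f \<Longrightarrow> pdiffable W g \<Longrightarrow> pdiffable W (\<lambda>p. f p * g p)"
  by (auto simp: pdiffable_def)
lemma pdiffable_uminus: "pdiffable W f \<Longrightarrow> pdiffable W (\<lambda>p. - f p)"
  by (auto simp: pdiffable_def)

lemma pt_add: "pdiffable W f \<Longrightarrow> pdiffable W g \<Longrightarrow> p \<in> W \<Longrightarrow>
   pt (\<lambda>p. f p + g p) p = pt f p + pt g p"
  apply (cases p) apply simp
  apply (rule pt_eqI) by (auto simp: pdiffable_def intro!: derivative_eq_intros pt_deriv)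
lemma ps_add: "pdiffable W f \<Longrightarrow> pdiffable W g \<Longrightarrow> p \<in> W \<Longrightarrow>
   ps (\<lambda>p. f p + g p) p = ps f p + ps g p"
  apply (cases p) apply simp
  apply (rule ps_eqI) by (auto simp: pdiffable_def intro!: derivative_eq_intros ps_deriv)
lemma pt_mult: "pdiffable W f \<Longrightarrow> pdiffable W g \<Longrightarrow> p \<in> W \<Longrightarrow>
   pt (\<lambda>p. f p * g p) p = pt f p * g p + f p * pt g p"
  apply (cases p) apply simp
  apply (rule pt_eqI) by (auto simp: pdiffable_def intro!: derivative_eq_intros pt_deriv)
lemma ps_mult: "pdiffable W f \<Longrightarrow> pdiffable W g \<Longrightarrow> p \<in> W \<Longrightarrow>
   ps (\<lambda>p. f p * g p) p = ps f p * g p + f p * ps g p"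
  apply (cases p) apply simp
  apply (rule ps_eqI) by (auto simp: pdiffable_def intro!: derivative_eq_intros ps_deriv)
lemma pt_uminus: "pdiffable W f \<Longrightarrow> p \<in> W \<Longrightarrow> pt (\<lambda>p. - f p) p = - pt f p"
  apply (cases p) apply simp
  apply (rule pt_eqI) by (auto simp: pdiffable_def intro!: derivative_eq_intros pt_deriv)
lemma ps_uminus: "pdiffable W f \<Longrightarrow> p \<in> W \<Longrightarrow> ps (\<lambda>p. - f p) p = - ps f p"
  apply (cases p) apply simp
  apply (rule ps_eqI) by (auto simp: pdiffable_def intro!: derivative_eq_intros ps_deriv)
lemma pt_inverse: "pdiffable W f \<Longrightarrow> p \<in> W \<Longrightarrow> f p \<noteq> 0 \<Longrightarrow>
   pt (\<lambda>p. inverse (f p)) p = - pt f p * (inverse (f p) * inverse (f p))"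
  apply (cases p) apply simp
  apply (rule pt_eqI) by (auto simp: pdiffable_def intro!: derivative_eq_intros pt_deriv)
lemma ps_inverse: "pdiffable W f \<Longrightarrow> p \<in> W \<Longrightarrow> f p \<noteq> 0 \<Longrightarrow>
   ps (\<lambda>p. inverse (f p)) p = - ps f p * (inverse (f p) * inverse (f p))"
  apply (cases p) apply simp
  apply (rule ps_eqI) by (auto simp: pdiffable_def intro!: derivative_eq_intros ps_deriv)


lemma Ck_add: assumes "open W" shows "Ck k W f \<Longrightarrow> Ck k W g \<Longrightarrow> Ck k W (\<lambda>p. f p + g p)"
proof (induction k arbitrary: f g)
  case 0 then show ?case by (auto intro!: continuous_intros)
next
  case (Suc k)
  note F = Ck_SucD[OF Suc.prems(1)] and G = Ck_SucD[OF Suc.prems(2)]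
  have "Ck k W (pt (\<lambda>p. f p + g p))"
    by (rule Ck_cong[OF assms, of "\<lambda>p. pt f p + pt g p"]) (use F G pt_add Suc.IH in auto)
  moreover have "Ck k W (ps (\<lambda>p. f p + g p))"
    by (rule Ck_cong[OF assms, of "\<lambda>p. ps f p + ps g p"]) (use F G ps_add Suc.IH in auto)
  ultimately show ?case using F G by (intro Ck_SucI) (auto intro!: continuous_intros pdiffable_add)
qed

lemma Ck_uminus: assumes "open W" shows "Ck k W f \<Longrightarrow> Ck k W (\<lambda>p. - f p)"
proof (induction k arbitrary: f)
  case 0 then show ?case by (auto intro!: continuous_intros)
next
  case (Suc k)
  note F = Ck_SucD[OF Suc.prems(1)]
  have "Ck k W (pt (\<lambda>p. - f p))"
    by (rule Ck_cong[OF assms, of "\<lambda>p. - pt f p"]) (use F pt_uminus Suc.IH in auto)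
  moreover have "Ck k W (ps (\<lambda>p. - f p))"
    by (rule Ck_cong[OF assms, of "\<lambda>p. - ps f p"]) (use F ps_uminus Suc.IH in auto)
  ultimately show ?case using F by (intro Ck_SucI) (auto intro!: continuous_intros pdiffable_uminus)
qed

lemma Ck_mult: assumes "open W" shows "Ck k W f \<Longrightarrow> Ck k W g \<Longrightarrow> Ck k W (\<lambda>p. f p * g p)"
proof (induction k arbitrary: f g)
  case 0 then show ?case by (auto intro!: continuous_intros)
next
  case (Suc k)
  note F = Ck_SucD[OF Suc.prems(1)] and G = Ck_SucD[OF Suc.prems(2)]
  note f = Ck_mono[OF Suc.prems(1)] and g = Ck_mono[OF Suc.prems(2)]
  have "Ck k W (pt (\<lambda>p. f p * g p))"
    by (rule Ck_cong[OF assms, of "\<lambda>p. pt f p * g p + f p * pt g p"])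
       (use F G pt_mult f g in \<open>auto intro!: Ck_add[OF assms] Suc.IH\<close>)
  moreover have "Ck k W (ps (\<lambda>p. f p * g p))"
    by (rule Ck_cong[OF assms, of "\<lambda>p. ps f p * g p + f p * ps g p"])
       (use F G ps_mult f g in \<open>auto intro!: Ck_add[OF assms] Suc.IH\<close>)
  ultimately show ?case using F G by (intro Ck_SucI) (auto intro!: continuous_intros pdiffable_mult)
qed

lemma pdiffable_inverse: "pdiffable W f \<Longrightarrow> (\<And>p. p \<in> W \<Longrightarrow> f p \<noteq> 0) \<Longrightarrow> pdiffable W (\<lambda>p. inverse (f p))"
proof -
  have inv: "(\<lambda>x. inverse (u x)) differentiable at a" if "u differentiable at a" "u a \<noteq> 0" for u :: "real \<Rightarrow> real" and a
  proof -
    from that(1) obtain D where "(u has_real_derivative D) (at a)" by (auto simp: real_differentiable_def)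
    then have "((\<lambda>x. inverse (u x)) has_real_derivative - D * (inverse (u a) * inverse (u a))) (at a)"
      using that(2) by (auto intro!: derivative_eq_intros)
    then show ?thesis by (auto simp: real_differentiable_def)
  qed
  show "pdiffable W f \<Longrightarrow> (\<And>p. p \<in> W \<Longrightarrow> f p \<noteq> 0) \<Longrightarrow> pdiffable W (\<lambda>p. inverse (f p))"
    unfolding pdiffable_def by (auto intro!: inv)
qed

lemma Ck_inverse: assumes "open W" shows "Ck k W f \<Longrightarrow> (\<And>p. p \<in> W \<Longrightarrow> f p \<noteq> 0) \<Longrightarrow> Ck k W (\<lambda>p. inverse (f p))"
proof (induction k arbitrary: f)
  case 0 then show ?case by (auto intro!: continuous_intros)
next
  case (Suc k)
  note F = Ck_SucD[OF Suc.prems(1)]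
  note f = Ck_mono[OF Suc.prems(1)]
  have i: "Ck k W (\<lambda>p. inverse (f p))" using Suc.IH[OF f] Suc.prems(2) by blast
  have "Ck k W (pt (\<lambda>p. inverse (f p)))"
    by (rule Ck_cong[OF assms, of "\<lambda>p. - pt f p * (inverse (f p) * inverse (f p))"])
       (use F pt_inverse Suc.prems(2) i in \<open>auto intro!: Ck_mult[OF assms] Ck_uminus[OF assms]\<close>)
  moreover have "Ck k W (ps (\<lambda>p. inverse (f p)))"
    by (rule Ck_cong[OF assms, of "\<lambda>p. - ps f p * (inverse (f p) * inverse (f p))"])
       (use F ps_inverse Suc.prems(2) i in \<open>auto intro!: Ck_mult[OF assms] Ck_uminus[OF assms]\<close>)
  ultimately show ?case using F Suc.prems(2) by (intro Ck_SucI) (auto intro!: continuous_intros pdiffable_inverse)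
qed

lemma Cinf_add: "open W \<Longrightarrow> Cinf W f \<Longrightarrow> Cinf W g \<Longrightarrow> Cinf W (\<lambda>p. f p + g p)"
  by (simp add: Cinf_def Ck_add)
lemma Cinf_mult: "open W \<Longrightarrow> Cinf W f \<Longrightarrow> Cinf W g \<Longrightarrow> Cinf W (\<lambda>p. f p * g p)"
  by (simp add: Cinf_def Ck_mult)
lemma Cinf_uminus: "open W \<Longrightarrow> Cinf W f \<Longrightarrow> Cinf W (\<lambda>p. - f p)"
  by (simp add: Cinf_def Ck_uminus)
lemma Cinf_diff: "open W \<Longrightarrow> Cinf W f \<Longrightarrow> Cinf W g \<Longrightarrow> Cinf W (\<lambda>p. f p - g p)"
  using Cinf_add[of W f "\<lambda>p. - g p"] Cinf_uminus[of W g] by simp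
lemma Cinf_inverse: "open W \<Longrightarrow> Cinf W f \<Longrightarrow> (\<And>p. p \<in> W \<Longrightarrow> f p \<noteq> 0) \<Longrightarrow> Cinf W (\<lambda>p. inverse (f p))"
  by (simp add: Cinf_def Ck_inverse)
lemma Cinf_divide: "open W \<Longrightarrow> Cinf W f \<Longrightarrow> Cinf W g \<Longrightarrow> (\<And>p. p \<in> W \<Longrightarrow> g p \<noteq> 0) \<Longrightarrow> Cinf W (\<lambda>p. f p / g p)"
  using Cinf_mult[of W f "\<lambda>p. inverse (g p)"] Cinf_inverse[of W g] by (simp add: divide_inverse)


lemma Ck1_frechet:
  assumes W: "open W" and g: "Ck (Suc 0) W g" and p: "(x,y) \<in> W"
  shows "(g has_derivative (\<lambda>(h,k). pt g (x,y) * h + ps g (x,y) * k)) (at (x,y))"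
proof -
  note G = Ck_SucD[OF g]
  obtain r where r: "r > 0" "ball (x,y) r \<subseteq> W" using W p open_contains_ball by blast
  define X where "X = ball x (r/2)"
  define Y where "Y = ball y (r/2)"
  have XY: "X \<times> Y \<subseteq> W"
  proof
    fix q assume "q \<in> X \<times> Y"
    then obtain a b where q: "q = (a,b)" "dist x a < r/2" "dist y b < r/2" by (auto simp: X_def Y_def)
    have "dist (x,y) (a,b) \<le> dist x a + dist y b"
      by (simp add: dist_Pair_Pair sqrt_sum_squares_le_sum_abs dist_real_def del: sqrt_le_D)
    then show "q \<in> W" using q r by auto
  qed
  have oXY: "open (X \<times> Y)" by (auto simp: X_def Y_def intro!: open_Times)
  have xyin: "(x,y) \<in> X \<times> Y" using r by (auto simp: X_def Y_def)
  have fx: "((\<lambda>a. g (a,y)) has_derivative (\<lambda>h. pt g (x,y) * h)) (at x within X)"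
    using pt_deriv[of g y x] G p unfolding pdiffable_def has_field_derivative_def
    by (auto intro: has_derivative_at_withinI)
  have fy: "((\<lambda>b. g (a,b)) has_derivative blinfun_apply (blinfun_mult_right (ps g (a,b)))) (at b within Y)"
    if "a \<in> X" "b \<in> Y" for a b
    using ps_deriv[of g a b] G XY that unfolding pdiffable_def has_field_derivative_def
    by (auto intro: has_derivative_at_withinI)
  have cps: "continuous (at (x,y)) (ps g)"
    using Ck_cont[of 0 W "ps g"] G W p by (simp add: continuous_on_eq_continuous_at)
  have "continuous (at (x,y)) (\<lambda>q. blinfun_mult_right (ps g q))"
    by (rule continuous_at_compose[OF cps, unfolded o_def]) (auto intro!: linear_continuous_at bounded_linear_blinfun_mult_right)
  then have fyc: "continuous (at (x, y) within X \<times> Y) (\<lambda>(a, b). blinfun_mult_right (ps g (a,b)))"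
    by (auto intro: continuous_at_imp_continuous_at_within simp: case_prod_unfold)
  have "((\<lambda>(a, b). g (a,b)) has_derivative (\<lambda>(tx, ty). pt g (x,y) * tx + blinfun_mult_right (ps g (x,y)) ty)) (at (x, y) within X \<times> Y)"
    by (rule has_derivative_partialsI[where f="\<lambda>a b. g (a,b)", OF fx fy fyc]) (use r in \<open>auto simp: X_def Y_def\<close>)
  then show ?thesis using at_within_open[OF xyin oXY] by (simp add: case_prod_unfold)
qed

lemma chain_T:
  assumes W: "open W" and g: "Ck (Suc 0) W g" and p: "(T s, s) \<in> W"
    and T: "(T has_real_derivative T') (at s)"
  shows "((\<lambda>s. g (T s, s)) has_real_derivative pt g (T s, s) * T' + ps g (T s, s)) (at s)"
proof -
  have i: "((\<lambda>s. (T s, s)) has_derivative (\<lambda>k. (T' * k, k))) (at s)"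
    using T unfolding has_field_derivative_def by (auto intro!: derivative_eq_intros)
  have "((\<lambda>s. g (T s, s)) has_derivative (\<lambda>k. (\<lambda>(h,k). pt g (T s,s) * h + ps g (T s,s) * k) (T' * k, k))) (at s)"
    by (rule has_derivative_compose[OF i Ck1_frechet[OF W g p]])
  then show ?thesis unfolding has_field_derivative_def
    by (rule has_derivative_eq_rhs) (auto simp: algebra_simps fun_eq_iff)
qed

lemma Cinf_chain_T:
  assumes "open W" "Cinf W g" "(T s, s) \<in> W" "(T has_real_derivative T') (at s)"
  shows "((\<lambda>s. g (T s, s)) has_real_derivative pt g (T s, s) * T' + ps g (T s, s)) (at s)"
  using chain_T assms Cinf_def by blast

lemma clairaut:
  assumes W: "open W" and g: "Ck (Suc (Suc 0)) W g" and p: "(a,b) \<in> W"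
  shows "ps (pt g) (a,b) = pt (ps g) (a,b)"
proof (rule ccontr)
  assume ne: "ps (pt g) (a,b) \<noteq> pt (ps g) (a,b)"
  define A where "A = ps (pt g) (a,b)"
  define B where "B = pt (ps g) (a,b)"
  define d where "d = \<bar>A - B\<bar>"
  have d: "d > 0" using ne by (simp add: d_def A_def B_def)
  note G = Ck_SucD[OF g]
  note Gt = Ck_SucD[OF conjunct1[OF conjunct2[OF conjunct2[OF G]]]]
  note Gs = Ck_SucD[OF conjunct2[OF conjunct2[OF conjunct2[OF G]]]]
  have c1: "continuous_on W (ps (pt g))" "continuous_on W (pt (ps g))"
    using Gt Gs by (auto dest: Ck_cont)
  have e1: "\<forall>e>0. \<forall>\<^sub>F q in at (a,b). dist (ps (pt g) q) A < e"
    using c1(1) W p unfolding A_def by (auto simp: continuous_on_eq_continuous_at continuous_at tendsto_iff)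
  have e2: "\<forall>e>0. \<forall>\<^sub>F q in at (a,b). dist (pt (ps g) q) B < e"
    using c1(2) W p unfolding B_def by (auto simp: continuous_on_eq_continuous_at continuous_at tendsto_iff)
  have "\<forall>\<^sub>F q in at (a,b). dist (ps (pt g) q) A < d/2" using e1 d half_gt_zero by blast
  moreover have "\<forall>\<^sub>F q in at (a,b). dist (pt (ps g) q) B < d/2" using e2 d half_gt_zero by blast
  moreover have "\<forall>\<^sub>F q in at (a,b). q \<in> W"
    using W p eventually_at_topological by blast
  ultimately have "\<forall>\<^sub>F q in at (a,b). dist (ps (pt g) q) A < d/2 \<and> dist (pt (ps g) q) B < d/2 \<and> q \<in> W"
    by eventually_elim auto
  then obtain r where r: "r > 0" "\<And>q. q \<noteq> (a,b) \<Longrightarrow> dist q (a,b) < r \<Longrightarrow>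
      dist (ps (pt g) q) A < d/2 \<and> dist (pt (ps g) q) B < d/2 \<and> q \<in> W"
    unfolding eventually_at by blast
  have R: "dist (ps (pt g) q) A < d/2 \<and> dist (pt (ps g) q) B < d/2 \<and> q \<in> W" if "dist q (a,b) < r" for q
    using r(2)[OF _ that] d p by (cases "q = (a,b)") (auto simp: A_def B_def)
  define h where "h = r/3"
  have h: "h > 0" using r by (simp add: h_def)
  have box: "dist (u,v) (a,b) < r" if "a \<le> u" "u \<le> a + h" "b \<le> v" "v \<le> b + h" for u v
  proof -
    have "dist (u,v) (a,b) \<le> dist u a + dist v b"
      by (simp add: dist_Pair_Pair sqrt_sum_squares_le_sum_abs dist_real_def del: sqrt_le_D)
    also have "\<dots> \<le> h + h" using that by (simp add: dist_real_def)
    also have "\<dots> < r" using r unfolding h_def by simp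
    finally show ?thesis .
  qed
  have inW: "(u,v) \<in> W" if "a \<le> u" "u \<le> a + h" "b \<le> v" "v \<le> b + h" for u v
    using R box that by blast
  have dg: "((\<lambda>\<tau>. g (\<tau>,v)) has_real_derivative pt g (u,v)) (at u)"
       "((\<lambda>\<sigma>. g (u,\<sigma>)) has_real_derivative ps g (u,v)) (at v)"
    if "a \<le> u" "u \<le> a + h" "b \<le> v" "v \<le> b + h" for u v
    using inW[OF that] G by (auto simp: pdiffable_def intro!: pt_deriv ps_deriv)
  have dgt: "((\<lambda>\<sigma>. pt g (u,\<sigma>)) has_real_derivative ps (pt g) (u,v)) (at v)"
    if "a \<le> u" "u \<le> a + h" "b \<le> v" "v \<le> b + h" for u v
    using inW[OF that] Gt by (auto simp: pdiffable_def intro!: ps_deriv)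
  have dgs: "((\<lambda>\<tau>. ps g (\<tau>,v)) has_real_derivative pt (ps g) (u,v)) (at u)"
    if "a \<le> u" "u \<le> a + h" "b \<le> v" "v \<le> b + h" for u v
    using inW[OF that] Gs by (auto simp: pdiffable_def intro!: pt_deriv)
  define \<Delta> where "\<Delta> = g (a+h,b+h) - g (a+h,b) - g (a,b+h) + g (a,b)"
  have D1: "((\<lambda>\<tau>. g (\<tau>,b+h) - g (\<tau>,b)) has_real_derivative pt g (x,b+h) - pt g (x,b)) (at x)"
    if "a \<le> x" "x \<le> a + h" for x
    using that h by (auto intro!: derivative_eq_intros dg)
  obtain \<xi> where \<xi>: "a < \<xi>" "\<xi> < a + h"
    "(g (a+h,b+h) - g (a+h,b)) - (g (a,b+h) - g (a,b)) = ((a+h) - a) * (pt g (\<xi>,b+h) - pt g (\<xi>,b))"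
    using MVT2[of a "a+h", OF _ D1] h by auto
  have D2: "((\<lambda>\<sigma>. pt g (\<xi>,\<sigma>)) has_real_derivative ps (pt g) (\<xi>,x)) (at x)"
    if "b \<le> x" "x \<le> b + h" for x
    using that h \<xi> by (auto intro!: dgt)
  obtain \<eta> where \<eta>: "b < \<eta>" "\<eta> < b + h"
    "pt g (\<xi>,b+h) - pt g (\<xi>,b) = ((b+h) - b) * ps (pt g) (\<xi>,\<eta>)"
    using MVT2[of b "b+h", OF _ D2] h by auto
  have D3: "((\<lambda>\<sigma>. g (a+h,\<sigma>) - g (a,\<sigma>)) has_real_derivative ps g (a+h,x) - ps g (a,x)) (at x)"
    if "b \<le> x" "x \<le> b + h" for x
    using that h by (auto intro!: derivative_eq_intros dg)
  obtain \<eta>' where \<eta>': "b < \<eta>'" "\<eta>' < b + h"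
    "(g (a+h,b+h) - g (a,b+h)) - (g (a+h,b) - g (a,b)) = ((b+h) - b) * (ps g (a+h,\<eta>') - ps g (a,\<eta>'))"
    using MVT2[of b "b+h", OF _ D3] h by auto
  have D4: "((\<lambda>\<tau>. ps g (\<tau>,\<eta>')) has_real_derivative pt (ps g) (x,\<eta>')) (at x)"
    if "a \<le> x" "x \<le> a + h" for x
    using that h \<eta>' by (auto intro!: dgs)
  obtain \<xi>' where \<xi>': "a < \<xi>'" "\<xi>' < a + h"
    "ps g (a+h,\<eta>') - ps g (a,\<eta>') = ((a+h) - a) * pt (ps g) (\<xi>',\<eta>')"
    using MVT2[of a "a+h", OF _ D4] h by auto
  have "h * (h * ps (pt g) (\<xi>,\<eta>)) = h * (h * pt (ps g) (\<xi>',\<eta>'))"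
    using \<xi>(3) \<eta>(3) \<eta>'(3) \<xi>'(3) by (simp add: algebra_simps)
  then have eq: "ps (pt g) (\<xi>,\<eta>) = pt (ps g) (\<xi>',\<eta>')" using h by simp
  have "dist (ps (pt g) (\<xi>,\<eta>)) A < d/2" using R box \<xi> \<eta> by auto
  moreover have "dist (pt (ps g) (\<xi>',\<eta>')) B < d/2" using R box \<xi>' \<eta>' by auto
  ultimately have "\<bar>A - B\<bar> < d" using eq by (simp add: dist_real_def abs_if split: if_splits; linarith)
  then show False by (simp add: d_def)
qed

lemma Cinf_clairaut: "open W \<Longrightarrow> Cinf W g \<Longrightarrow> p \<in> W \<Longrightarrow> ps (pt g) p = pt (ps g) p"
  using clairaut[of W g "fst p" "snd p"] by (simp add: Cinf_def)


lemma dist_pair_le: "dist (a::real, b::real) (c, d) \<le> \<bar>a - c\<bar> + \<bar>b - d\<bar>"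
  by (simp add: dist_Pair_Pair sqrt_sum_squares_le_sum_abs dist_real_def del: sqrt_le_D)

lemma mvt_between:
  fixes f f' :: "real \<Rightarrow> real"
  assumes "\<And>x. min a b \<le> x \<Longrightarrow> x \<le> max a b \<Longrightarrow> (f has_real_derivative f' x) (at x)"
  shows "\<exists>z. min a b \<le> z \<and> z \<le> max a b \<and> f b - f a = (b - a) * f' z"
proof (cases a b rule: linorder_cases)
  case less
  then obtain z where "a < z" "z < b" "f b - f a = (b - a) * f' z"
    using MVT2[of a b f f'] assms by (force simp: min_def max_def)
  then show ?thesis using less by (intro exI[of _ z]) (auto simp: min_def max_def)
next
  case equal then show ?thesis by auto
next
  case greater
  then obtain z where "b < z" "z < a" "f a - f b = (a - b) * f' z"
    using MVT2[of b a f f'] assms by (force simp: min_def max_def)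
  then show ?thesis using greater by (intro exI[of _ z]) (auto simp: algebra_simps min_def max_def)
qed

lemma ball_box:
  assumes "ball (t0::real,s0::real) r \<subseteq> W" "\<bar>t - t0\<bar> \<le> r/3" "\<bar>s - s0\<bar> \<le> r/3" "r > 0"
  shows "(t,s) \<in> W"
proof -
  have "dist (t0,s0) (t,s) \<le> \<bar>t0 - t\<bar> + \<bar>s0 - s\<bar>" by (rule dist_pair_le)
  also have "\<dots> < r" using assms by linarith
  finally show ?thesis using assms(1) by auto
qed


lemma ift:
  fixes H :: rfun
  assumes W: "open W" and H: "Ck (Suc 0) W H" and p0: "(t0,s0) \<in> W" and H0: "H (t0,s0) = 0"
    and pos: "\<And>p. p \<in> W \<Longrightarrow> pt H p > 0"
  shows "\<exists>\<epsilon>>0. \<exists>\<delta>>0. \<exists>T. {t0-\<epsilon>..t0+\<epsilon>} \<times> {s0-\<delta><..<s0+\<delta>} \<subseteq> W \<and> T s0 = t0 \<and>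
     (\<forall>s\<in>{s0-\<delta><..<s0+\<delta>}. \<bar>T s - t0\<bar> < \<epsilon> \<and> H (T s, s) = 0 \<and>
         (T has_real_derivative - ps H (T s, s) / pt H (T s, s)) (at s)) \<and>
     (\<forall>t s. \<bar>t - t0\<bar> \<le> \<epsilon> \<and> s \<in> {s0-\<delta><..<s0+\<delta>} \<longrightarrow> (H (t,s) = 0 \<longleftrightarrow> t = T s))"
proof -
  note HH = Ck_SucD[OF H]
  have cH: "continuous_on W H" and pdH: "pdiffable W H" and cHt: "continuous_on W (pt H)"
    and cHs: "continuous_on W (ps H)" using HH by auto
  obtain r where r: "r > 0" "ball (t0,s0) r \<subseteq> W" using W p0 open_contains_ball by blast
  define \<epsilon> where "\<epsilon> = r/3"
  have \<epsilon>: "\<epsilon> > 0" using r by (simp add: \<epsilon>_def)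
  have inbox: "(t,s) \<in> W" if "\<bar>t - t0\<bar> \<le> \<epsilon>" "\<bar>s - s0\<bar> \<le> \<epsilon>" for t s
    using ball_box[OF r(2) _ _ r(1)] that by (simp add: \<epsilon>_def)
  have dHt: "((\<lambda>\<tau>. H (\<tau>,s)) has_real_derivative pt H (t,s)) (at t)" if "(t,s) \<in> W" for t s
    using pdH that by (auto simp: pdiffable_def intro!: pt_deriv)
  have dHs: "((\<lambda>\<sigma>. H (t,\<sigma>)) has_real_derivative ps H (t,s)) (at s)" if "(t,s) \<in> W" for t s
    using pdH that by (auto simp: pdiffable_def intro!: ps_deriv)
  have mono: "H (a,s) < H (b,s)" if "\<bar>s - s0\<bar> \<le> \<epsilon>" "t0 - \<epsilon> \<le> a" "a < b" "b \<le> t0 + \<epsilon>" for a b s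
  proof (rule DERIV_pos_imp_increasing[OF that(3)])
    fix x assume "a \<le> x" "x \<le> b"
    then have "(x,s) \<in> W" using that by (intro inbox) auto
    then show "\<exists>y. ((\<lambda>\<tau>. H (\<tau>,s)) has_real_derivative y) (at x) \<and> y > 0"
      using dHt pos by blast
  qed
  have mono_le: "H (a,s) \<le> H (b,s)" if "\<bar>s - s0\<bar> \<le> \<epsilon>" "t0 - \<epsilon> \<le> a" "a \<le> b" "b \<le> t0 + \<epsilon>" for a b s
    using mono[OF that(1,2) _ that(4)] that(3) by (cases "a = b") auto
  have contS: "isCont (\<lambda>\<sigma>. H (t,\<sigma>)) s" if "\<bar>t - t0\<bar> \<le> \<epsilon>" "\<bar>s - s0\<bar> \<le> \<epsilon>" for t s
    using dHs[OF inbox[OF that]] DERIV_isCont by blast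
  have contT: "isCont (\<lambda>\<tau>. H (\<tau>,s)) t" if "\<bar>t - t0\<bar> \<le> \<epsilon>" "\<bar>s - s0\<bar> \<le> \<epsilon>" for t s
    using dHt[OF inbox[OF that]] DERIV_isCont by blast
  have persist: "\<exists>d>0. \<forall>\<sigma>. \<bar>\<sigma> - s\<bar> < d \<longrightarrow> H (t,\<sigma>) < 0" if "\<bar>t - t0\<bar> \<le> \<epsilon>" "\<bar>s - s0\<bar> \<le> \<epsilon>" "H (t,s) < 0" for t s
  proof -
    have "\<forall>\<^sub>F \<sigma> in at s. H (t,\<sigma>) < 0"
      using order_tendstoD(2)[OF contS[OF that(1,2), unfolded isCont_def] that(3)] .
    then obtain d where d: "d > 0" "\<And>\<sigma>. \<sigma> \<noteq> s \<Longrightarrow> dist \<sigma> s < d \<Longrightarrow> H (t,\<sigma>) < 0"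
      unfolding eventually_at by blast
    have "H (t,\<sigma>) < 0" if "\<bar>\<sigma> - s\<bar> < d" for \<sigma>
      using d(2)[of \<sigma>] that(1) \<open>H (t,s) < 0\<close> by (cases "\<sigma> = s") (auto simp: dist_real_def)
    then show ?thesis using d(1) by blast
  qed
  have persist': "\<exists>d>0. \<forall>\<sigma>. \<bar>\<sigma> - s\<bar> < d \<longrightarrow> H (t,\<sigma>) > 0" if "\<bar>t - t0\<bar> \<le> \<epsilon>" "\<bar>s - s0\<bar> \<le> \<epsilon>" "H (t,s) > 0" for t s
  proof -
    have "\<forall>\<^sub>F \<sigma> in at s. H (t,\<sigma>) > 0"
      using order_tendstoD(1)[OF contS[OF that(1,2), unfolded isCont_def] that(3)] .
    then obtain d where d: "d > 0" "\<And>\<sigma>. \<sigma> \<noteq> s \<Longrightarrow> dist \<sigma> s < d \<Longrightarrow> H (t,\<sigma>) > 0"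
      unfolding eventually_at by blast
    have "H (t,\<sigma>) > 0" if "\<bar>\<sigma> - s\<bar> < d" for \<sigma>
      using d(2)[of \<sigma>] that(1) \<open>H (t,s) > 0\<close> by (cases "\<sigma> = s") (auto simp: dist_real_def)
    then show ?thesis using d(1) by blast
  qed
  have neg0: "H (t0 - \<epsilon>, s0) < 0" using mono[of s0 "t0 - \<epsilon>" t0] \<epsilon> H0 by simp
  have pos0: "H (t0 + \<epsilon>, s0) > 0" using mono[of s0 t0 "t0 + \<epsilon>"] \<epsilon> H0 by simp
  obtain d1 where d1: "d1 > 0" "\<And>\<sigma>. \<bar>\<sigma> - s0\<bar> < d1 \<Longrightarrow> H (t0 - \<epsilon>, \<sigma>) < 0"
    using persist[of "t0 - \<epsilon>" s0] neg0 \<epsilon> by auto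
  obtain d2 where d2: "d2 > 0" "\<And>\<sigma>. \<bar>\<sigma> - s0\<bar> < d2 \<Longrightarrow> H (t0 + \<epsilon>, \<sigma>) > 0"
    using persist'[of "t0 + \<epsilon>" s0] pos0 \<epsilon> by auto
  define \<delta> where "\<delta> = min \<epsilon> (min d1 d2)"
  have \<delta>: "\<delta> > 0" using \<epsilon> d1 d2 by (simp add: \<delta>_def)
  define I where "I = {s0-\<delta><..<s0+\<delta>}"
  have sI: "\<bar>s - s0\<bar> < \<delta>" if "s \<in> I" for s using that by (auto simp: I_def abs_if)
  have sI\<epsilon>: "\<bar>s - s0\<bar> \<le> \<epsilon>" if "s \<in> I" for s using sI[OF that] by (simp add: \<delta>_def)
  have ex: "\<exists>t. \<bar>t - t0\<bar> < \<epsilon> \<and> H (t,s) = 0" if sIn: "s \<in> I" for s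
  proof -
    have a: "H (t0 - \<epsilon>, s) < 0" using d1(2) sI[OF sIn] by (simp add: \<delta>_def)
    have b: "H (t0 + \<epsilon>, s) > 0" using d2(2) sI[OF sIn] by (simp add: \<delta>_def)
    obtain t where t: "t0 - \<epsilon> \<le> t" "t \<le> t0 + \<epsilon>" "H (t,s) = 0"
      using IVT[of "\<lambda>\<tau>. H (\<tau>,s)" "t0 - \<epsilon>" 0 "t0 + \<epsilon>"] a b \<epsilon> contT sI\<epsilon>[OF sIn] by force
    then have "t \<noteq> t0 - \<epsilon>" "t \<noteq> t0 + \<epsilon>" using a b by auto
    then show ?thesis using t by (intro exI[of _ t]) auto
  qed
  have uniq: "t1 = t2" if "s \<in> I" "\<bar>t1 - t0\<bar> \<le> \<epsilon>" "\<bar>t2 - t0\<bar> \<le> \<epsilon>" "H (t1,s) = 0" "H (t2,s) = 0" for s t1 t2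
  proof (rule ccontr)
    assume "t1 \<noteq> t2"
    then consider "t1 < t2" | "t2 < t1" by linarith
    then show False
    proof cases
      case 1 then show ?thesis using mono[of s t1 t2] that sI\<epsilon>[OF that(1)] by (auto simp: abs_if split: if_splits)
    next
      case 2 then show ?thesis using mono[of s t2 t1] that sI\<epsilon>[OF that(1)] by (auto simp: abs_if split: if_splits)
    qed
  qed
  define T where "T s = (THE t. \<bar>t - t0\<bar> \<le> \<epsilon> \<and> H (t,s) = 0)" for s
  have Tprop: "\<bar>T s - t0\<bar> < \<epsilon> \<and> H (T s, s) = 0" if sIn: "s \<in> I" for s
  proof -
    obtain t where t: "\<bar>t - t0\<bar> < \<epsilon>" "H (t,s) = 0" using ex[OF sIn] by blast
    have "T s = t" unfolding T_def
      by (rule the_equality) (use t uniq[OF sIn] in auto)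
    then show ?thesis using t by simp
  qed
  have Tuniq: "t = T s" if "s \<in> I" "\<bar>t - t0\<bar> \<le> \<epsilon>" "H (t,s) = 0" for s t
    using uniq[OF that(1,2) _ that(3)] Tprop[OF that(1)] by auto
  have s0I: "s0 \<in> I" using \<delta> by (simp add: I_def)
  have Ts0: "T s0 = t0" using Tuniq[OF s0I _ H0] \<epsilon> by simp
  have openI: "open I" by (simp add: I_def)
  have Tcont: "\<exists>d>0. \<forall>s\<in>I. \<bar>s - s1\<bar> < d \<longrightarrow> \<bar>T s - T s1\<bar> < e" if s1: "s1 \<in> I" and e: "e > 0" for s1 e
  proof -
    define e' where "e' = min e (\<epsilon> - \<bar>T s1 - t0\<bar>)"
    have e': "e' > 0" "e' \<le> e" using e Tprop[OF s1] by (auto simp: e'_def)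
    have r1: "\<bar>T s1 - e' - t0\<bar> \<le> \<epsilon>" "\<bar>T s1 + e' - t0\<bar> \<le> \<epsilon>" using e' Tprop[OF s1] by (auto simp: e'_def abs_if)
    have n1: "H (T s1 - e', s1) < 0"
      using mono[of s1 "T s1 - e'" "T s1"] sI\<epsilon>[OF s1] Tprop[OF s1] r1 e' by (auto simp: abs_if split: if_splits)
    have p1: "H (T s1 + e', s1) > 0"
      using mono[of s1 "T s1" "T s1 + e'"] sI\<epsilon>[OF s1] Tprop[OF s1] r1 e' by (auto simp: abs_if split: if_splits)
    obtain da where da: "da > 0" "\<And>\<sigma>. \<bar>\<sigma> - s1\<bar> < da \<Longrightarrow> H (T s1 - e', \<sigma>) < 0"
      using persist[OF r1(1) sI\<epsilon>[OF s1] n1] by blast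
    obtain db where db: "db > 0" "\<And>\<sigma>. \<bar>\<sigma> - s1\<bar> < db \<Longrightarrow> H (T s1 + e', \<sigma>) > 0"
      using persist'[OF r1(2) sI\<epsilon>[OF s1] p1] by blast
    show ?thesis
    proof (intro exI[of _ "min da db"] conjI ballI impI)
      show "min da db > 0" using da db by simp
      fix s assume s: "s \<in> I" "\<bar>s - s1\<bar> < min da db"
      have hn: "H (T s1 - e', s) < 0" using da s by simp
      have hp: "H (T s1 + e', s) > 0" using db s by simp
      have "T s < T s1 + e'"
      proof (rule ccontr)
        assume "\<not> T s < T s1 + e'"
        then have "H (T s1 + e', s) \<le> H (T s, s)"
          using mono_le[of s "T s1 + e'" "T s"] sI\<epsilon>[OF s(1)] r1 Tprop[OF s(1)] by (auto simp: abs_if split: if_splits)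
        then show False using hp Tprop[OF s(1)] by simp
      qed
      moreover have "T s > T s1 - e'"
      proof (rule ccontr)
        assume "\<not> T s > T s1 - e'"
        then have "H (T s, s) \<le> H (T s1 - e', s)"
          using mono_le[of s "T s" "T s1 - e'"] sI\<epsilon>[OF s(1)] r1 Tprop[OF s(1)] by (auto simp: abs_if split: if_splits)
        then show False using hn Tprop[OF s(1)] by simp
      qed
      ultimately show "\<bar>T s - T s1\<bar> < e" using e' by (auto simp: abs_if)
    qed
  qed
  have Tder: "(T has_real_derivative - ps H (T s1, s1) / pt H (T s1, s1)) (at s1)" if s1: "s1 \<in> I" for s1
  proof -
    define p1 where "p1 = (T s1, s1)"
    have p1W: "p1 \<in> W" using inbox Tprop[OF s1] sI\<epsilon>[OF s1] by (simp add: p1_def)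
    have cta: "continuous (at p1) (pt H)" using cHt W p1W by (simp add: continuous_on_eq_continuous_at)
    have csa: "continuous (at p1) (ps H)" using cHs W p1W by (simp add: continuous_on_eq_continuous_at)
    have a1: "pt H p1 \<noteq> 0" using pos[OF p1W] by simp
    have c1: "continuous (at (p1,p1)) (\<lambda>z. ps H (snd z))"
      using continuous_at_compose[of "(p1,p1)" snd "ps H"] csa by (simp add: o_def continuous_snd continuous_ident)
    have c2: "continuous (at (p1,p1)) (\<lambda>z. pt H (fst z))"
      using continuous_at_compose[of "(p1,p1)" fst "pt H"] cta by (simp add: o_def continuous_fst continuous_ident)
    have cF: "continuous (at (p1,p1)) (\<lambda>z. - ps H (snd z) / pt H (fst z))"
      using c1 c2 a1 by (auto intro!: continuous_divide continuous_minus)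
    show ?thesis unfolding has_field_derivative_iff
    proof (rule metric_LIM_I)
      fix e :: real assume e: "e > 0"
      obtain \<rho> where \<rho>: "\<rho> > 0" "\<And>z. dist z (p1,p1) < \<rho> \<Longrightarrow>
          dist (- ps H (snd z) / pt H (fst z)) (- ps H p1 / pt H p1) < e"
        using cF e unfolding continuous_at_eps_delta by force
      obtain d1 where d1: "d1 > 0" "\<And>s. s \<in> I \<Longrightarrow> \<bar>s - s1\<bar> < d1 \<Longrightarrow> \<bar>T s - T s1\<bar> < \<rho>/3"
        using Tcont[OF s1, of "\<rho>/3"] \<rho> by auto
      obtain d2 where d2: "d2 > 0" "ball s1 d2 \<subseteq> I" using openI s1 open_contains_ball by blast
      show "\<exists>d>0. \<forall>s. s \<noteq> s1 \<and> dist s s1 < d \<longrightarrow>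
          dist ((T s - T s1) / (s - s1)) (- ps H (T s1, s1) / pt H (T s1, s1)) < e"
      proof (intro exI[of _ "min (\<rho>/3) (min d1 d2)"] conjI allI impI)
        show "min (\<rho>/3) (min d1 d2) > 0" using \<rho> d1 d2 by simp
        fix s assume s: "s \<noteq> s1 \<and> dist s s1 < min (\<rho>/3) (min d1 d2)"
        have sI': "s \<in> I" using s d2 by (auto simp: dist_commute)
        have ds: "\<bar>s - s1\<bar> < \<rho>/3" "\<bar>s - s1\<bar> < d1" using s by (auto simp: dist_real_def)
        have dT: "\<bar>T s - T s1\<bar> < \<rho>/3" using d1(2)[OF sI' ds(2)] .
        have Ts: "\<bar>T s - t0\<bar> < \<epsilon>" "H (T s, s) = 0" using Tprop[OF sI'] by auto
        have Ts1: "\<bar>T s1 - t0\<bar> < \<epsilon>" "H (T s1, s1) = 0" using Tprop[OF s1] by auto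
        obtain \<xi> where \<xi>: "min (T s1) (T s) \<le> \<xi>" "\<xi> \<le> max (T s1) (T s)"
           "H (T s, s) - H (T s1, s) = (T s - T s1) * pt H (\<xi>, s)"
          using mvt_between[of "T s1" "T s" "\<lambda>\<tau>. H (\<tau>,s)" "\<lambda>\<tau>. pt H (\<tau>,s)"]
            dHt inbox sI\<epsilon>[OF sI'] Ts(1) Ts1(1) by (force simp: abs_if min_def max_def split: if_splits)
        have segI: "\<sigma> \<in> I" if "min s1 s \<le> \<sigma>" "\<sigma> \<le> max s1 s" for \<sigma>
          using that s1 sI' by (auto simp: I_def min_def max_def split: if_splits)
        obtain \<eta> where \<eta>: "min s1 s \<le> \<eta>" "\<eta> \<le> max s1 s"
           "H (T s1, s) - H (T s1, s1) = (s - s1) * ps H (T s1, \<eta>)"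
          using mvt_between[of s1 s "\<lambda>\<sigma>. H (T s1,\<sigma>)" "\<lambda>\<sigma>. ps H (T s1,\<sigma>)"]
            dHs inbox sI\<epsilon> segI Ts1(1) by force
        have \<xi>W: "(\<xi>,s) \<in> W" using inbox \<xi> Ts(1) Ts1(1) sI\<epsilon>[OF sI'] by (force simp: abs_if min_def max_def split: if_splits)
        have apos: "pt H (\<xi>,s) > 0" using pos[OF \<xi>W] .
        have "0 = (T s - T s1) * pt H (\<xi>, s) + (s - s1) * ps H (T s1, \<eta>)"
          using \<xi>(3) \<eta>(3) Ts(2) Ts1(2) by simp
        then have q: "(T s - T s1) / (s - s1) = - ps H (T s1, \<eta>) / pt H (\<xi>, s)"
          using apos s by (simp add: field_simps)
        have "dist ((\<xi>,s),(T s1,\<eta>)) (p1,p1) \<le> dist (\<xi>,s) p1 + dist (T s1,\<eta>) p1"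
          by (simp add: dist_Pair_Pair del: sqrt_le_D) (rule sqrt_sum_squares_le_sum; simp)
        also have "\<dots> \<le> (\<bar>\<xi> - T s1\<bar> + \<bar>s - s1\<bar>) + (\<bar>T s1 - T s1\<bar> + \<bar>\<eta> - s1\<bar>)"
          unfolding p1_def by (intro add_mono dist_pair_le)
        also have "\<dots> < \<rho>"
          using \<xi>(1,2) \<eta>(1,2) dT ds by (auto simp: min_def max_def abs_if split: if_splits)
        finally have "dist (- ps H (T s1, \<eta>) / pt H (\<xi>, s)) (- ps H p1 / pt H p1) < e"
          using \<rho>(2)[of "((\<xi>,s),(T s1,\<eta>))"] by simp
        then show "dist ((T s - T s1) / (s - s1)) (- ps H (T s1, s1) / pt H (T s1, s1)) < e"
          using q by (simp add: p1_def)
      qed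
    qed
  qed
  have f1: "{t0 - \<epsilon>..t0 + \<epsilon>} \<times> {s0 - \<delta><..<s0 + \<delta>} \<subseteq> W"
    using inbox sI\<epsilon> by (force simp: I_def abs_if)
  have f2: "\<forall>s\<in>{s0 - \<delta><..<s0 + \<delta>}. \<bar>T s - t0\<bar> < \<epsilon> \<and> H (T s, s) = 0 \<and>
        (T has_real_derivative - ps H (T s, s) / pt H (T s, s)) (at s)"
    using Tprop Tder by (simp add: I_def)
  have f3: "\<forall>t s. \<bar>t - t0\<bar> \<le> \<epsilon> \<and> s \<in> {s0 - \<delta><..<s0 + \<delta>} \<longrightarrow> (H (t, s) = 0) = (t = T s)"
    using Tuniq Tprop by (auto simp: I_def)
  show ?thesis using f1 f2 f3 \<epsilon> \<delta> Ts0 by blast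
qed


lemma vd_real_eqI: "((f::real\<Rightarrow>real) has_real_derivative D) (at x) \<Longrightarrow> vd f x = D"
  by (simp add: vd_def has_real_derivative_iff_has_vector_derivative vector_derivative_at)

lemma vd_works: "h differentiable at x \<Longrightarrow> (h has_vector_derivative vd h x) (at x)"
  by (simp add: vd_def vector_derivative_works[symmetric])
lemma vd_eqI: "(h has_vector_derivative D) (at x) \<Longrightarrow> vd h x = D"
  by (simp add: vd_def vector_derivative_at)
lemma smooth1_works: "smooth1_on I h \<Longrightarrow> x \<in> I \<Longrightarrow> ((vd ^^ n) h has_vector_derivative (vd ^^ Suc n) h x) (at x)"
  using vd_works[of "(vd ^^ n) h" x] by (simp add: smooth1_on_def)

lemma vd_cong: "open I \<Longrightarrow> x \<in> I \<Longrightarrow> (\<And>y. y \<in> I \<Longrightarrow> f y = g y) \<Longrightarrow> vd f x = vd g x"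
  unfolding vd_def
  by (rule vector_derivative_cong_eq) (auto simp: eventually_nhds)

lemma smooth_along_rep:
  assumes W: "open W" and \<Phi>: "Cinf W \<Phi>" and I: "open I"
    and T: "\<And>s. s \<in> I \<Longrightarrow> (T s, s) \<in> W \<and> (T has_real_derivative \<Phi> (T s, s)) (at s)"
  shows "Cinf W g \<Longrightarrow> \<exists>Q. Cinf W Q \<and> (\<forall>s\<in>I. (vd ^^ n) (\<lambda>s. g (T s, s)) s = Q (T s, s))"
proof (induction n arbitrary: g)
  case 0 then show ?case by auto
next
  case (Suc n)
  then obtain Q where Q: "Cinf W Q" "\<And>s. s \<in> I \<Longrightarrow> (vd ^^ n) (\<lambda>s. g (T s, s)) s = Q (T s, s)" by blast
  define Q' where "Q' p = pt Q p * \<Phi> p + ps Q p" for p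
  have cQ': "Cinf W Q'" unfolding Q'_def
    by (intro Cinf_add Cinf_mult Cinf_pt Cinf_ps W Q(1) \<Phi>)
  have "(vd ^^ Suc n) (\<lambda>s. g (T s, s)) s = Q' (T s, s)" if s: "s \<in> I" for s
  proof -
    have "(vd ^^ Suc n) (\<lambda>s. g (T s, s)) s = vd ((vd ^^ n) (\<lambda>s. g (T s, s))) s" by simp
    also have "\<dots> = vd (\<lambda>s. Q (T s, s)) s" by (rule vd_cong[OF I s Q(2)])
    also have "\<dots> = Q' (T s, s)" unfolding Q'_def
      by (rule vd_real_eqI) (use Cinf_chain_T[OF W Q(1)] T[OF s] in auto)
    finally show ?thesis .
  qed
  then show ?case using cQ' by blast
qed

lemma smooth_along:
  assumes W: "open W" and \<Phi>: "Cinf W \<Phi>" and I: "open I"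
    and T: "\<And>s. s \<in> I \<Longrightarrow> (T s, s) \<in> W \<and> (T has_real_derivative \<Phi> (T s, s)) (at s)"
    and g: "Cinf W g"
  shows "smooth1_on I (\<lambda>s. g (T s, s))"
  unfolding smooth1_on_def
proof (intro allI ballI)
  fix n x assume x: "x \<in> I"
  obtain Q where Q: "Cinf W Q" "\<And>s. s \<in> I \<Longrightarrow> (vd ^^ n) (\<lambda>s. g (T s, s)) s = Q (T s, s)"
    using smooth_along_rep[OF W \<Phi> I T g] by blast
  have "((\<lambda>s. Q (T s, s)) has_real_derivative pt Q (T x, x) * \<Phi> (T x, x) + ps Q (T x, x)) (at x)"
    using Cinf_chain_T[OF W Q(1)] T[OF x] by auto
  then have "((vd ^^ n) (\<lambda>s. g (T s, s)) has_real_derivative pt Q (T x, x) * \<Phi> (T x, x) + ps Q (T x, x)) (at x)"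
    by (rule has_field_derivative_transform_within_open[OF _ I x]) (use Q(2) in auto)
  then show "(vd ^^ n) (\<lambda>s. g (T s, s)) differentiable at x"
    by (auto simp: real_differentiable_def)
qed

lemma smooth1_pair:
  assumes I: "open I" and f: "smooth1_on I f" and g: "smooth1_on I g"
  shows "smooth1_on I (\<lambda>s. (f s, g s))"
proof -
  have rep: "\<forall>x\<in>I. (vd ^^ n) (\<lambda>s. (f s, g s)) x = ((vd ^^ n) f x, (vd ^^ n) g x)" for n
  proof (induction n)
    case 0 then show ?case by simp
  next
    case (Suc n)
    show ?case
    proof
      fix x assume x: "x \<in> I"
      have "(vd ^^ Suc n) (\<lambda>s. (f s, g s)) x = vd (\<lambda>s. ((vd ^^ n) f s, (vd ^^ n) g s)) x"
        using vd_cong[OF I x, of "(vd ^^ n) (\<lambda>s. (f s, g s))"] Suc by simp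
      also have "\<dots> = ((vd ^^ Suc n) f x, (vd ^^ Suc n) g x)"
        by (rule vd_eqI, rule has_vector_derivative_Pair) (use f g x smooth1_works in auto)
      finally show "(vd ^^ Suc n) (\<lambda>s. (f s, g s)) x = ((vd ^^ Suc n) f x, (vd ^^ Suc n) g x)" .
    qed
  qed
  show ?thesis unfolding smooth1_on_def
  proof (intro allI ballI)
    fix n x assume x: "x \<in> I"
    have "((\<lambda>s. ((vd ^^ n) f s, (vd ^^ n) g s)) has_vector_derivative ((vd ^^ Suc n) f x, (vd ^^ Suc n) g x)) (at x)"
      by (rule has_vector_derivative_Pair) (use f g x smooth1_works in auto)
    then have "((vd ^^ n) (\<lambda>s. (f s, g s)) has_vector_derivative ((vd ^^ Suc n) f x, (vd ^^ Suc n) g x)) (at x)"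
      by (rule has_vector_derivative_transform_within_open[OF _ I x]) (use rep in auto)
    then show "(vd ^^ n) (\<lambda>s. (f s, g s)) differentiable at x"
      using differentiableI_vector by blast
  qed
qed

lemma vec2_decomp: "(x::real^2) = (x$1) *\<^sub>R axis 1 1 + (x$2) *\<^sub>R axis 2 1"
  by (simp add: vec_eq_iff forall_2 axis_def)

lemma has_vector_derivative_scaleR_left:
  fixes a :: "real \<Rightarrow> real"
  assumes "(a has_vector_derivative D) (at x)"
  shows "((\<lambda>s. a s *\<^sub>R u) has_vector_derivative D *\<^sub>R u) (at x)"
proof -
  have "(a has_real_derivative D) (at x)" using assms by (simp add: has_real_derivative_iff_has_vector_derivative)
  from has_vector_derivative_scaleR[OF this, of "\<lambda>_. u" 0] show ?thesis by simp
qed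

lemma smooth1_vec2:
  fixes f :: "real \<Rightarrow> real^2"
  assumes I: "open I" and f1: "smooth1_on I (\<lambda>s. f s $ 1)" and f2: "smooth1_on I (\<lambda>s. f s $ 2)"
  shows "smooth1_on I f"
proof -
  have fg: "(\<lambda>s. (\<lambda>s. f s $ 1) s *\<^sub>R (axis 1 1 :: real^2) + (\<lambda>s. f s $ 2) s *\<^sub>R axis 2 1) = f"
    by (rule ext) (rule vec2_decomp[symmetric])
  have lin: "(vd ^^ n) (\<lambda>s. a s *\<^sub>R (u::real^2) + b s *\<^sub>R v) x = (vd ^^ n) a x *\<^sub>R u + (vd ^^ n) b x *\<^sub>R v
     \<and> (vd ^^ n) (\<lambda>s. a s *\<^sub>R (u::real^2) + b s *\<^sub>R v) differentiable at x"
    if "smooth1_on I a" "smooth1_on I b" "x \<in> I" for n a b u v and x :: real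
    using that(3)
  proof (induction n arbitrary: x)
    case 0
    have d0a: "(a has_vector_derivative (vd ^^ Suc 0) a x) (at x)" using smooth1_works[OF that(1) 0, of 0] by simp
    have d0b: "(b has_vector_derivative (vd ^^ Suc 0) b x) (at x)" using smooth1_works[OF that(2) 0, of 0] by simp
    have "((\<lambda>s. a s *\<^sub>R u + b s *\<^sub>R v) has_vector_derivative (vd ^^ Suc 0) a x *\<^sub>R u + (vd ^^ Suc 0) b x *\<^sub>R v) (at x)"
      by (rule has_vector_derivative_add[OF has_vector_derivative_scaleR_left[OF d0a] has_vector_derivative_scaleR_left[OF d0b]])
    then show ?case using differentiableI_vector by auto
  next
    case (Suc n)
    have e2: "\<And>y. y \<in> I \<Longrightarrow> (vd ^^ n) (\<lambda>s. a s *\<^sub>R u + b s *\<^sub>R v) y = (vd ^^ n) a y *\<^sub>R u + (vd ^^ n) b y *\<^sub>R v"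
      using Suc.IH by blast
    have eq: "(vd ^^ Suc n) (\<lambda>s. a s *\<^sub>R u + b s *\<^sub>R v) x = vd (\<lambda>s. (vd ^^ n) a s *\<^sub>R u + (vd ^^ n) b s *\<^sub>R v) x"
      using vd_cong[OF I Suc.prems e2] by simp
    have da: "((vd ^^ n) a has_vector_derivative (vd ^^ Suc n) a x) (at x)"
      using smooth1_works[OF that(1) Suc.prems] .
    have db: "((vd ^^ n) b has_vector_derivative (vd ^^ Suc n) b x) (at x)"
      using smooth1_works[OF that(2) Suc.prems] .
    have D: "((\<lambda>s. (vd ^^ n) a s *\<^sub>R u + (vd ^^ n) b s *\<^sub>R v) has_vector_derivative
        (vd ^^ Suc n) a x *\<^sub>R u + (vd ^^ Suc n) b x *\<^sub>R v) (at x)"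
      by (rule has_vector_derivative_add; rule has_vector_derivative_scaleR_left; rule da db)
    have "(vd ^^ Suc n) (\<lambda>s. a s *\<^sub>R u + b s *\<^sub>R v) x = (vd ^^ Suc n) a x *\<^sub>R u + (vd ^^ Suc n) b x *\<^sub>R v"
      using eq vd_eqI[OF D] by simp
    moreover have "(vd ^^ Suc n) (\<lambda>s. a s *\<^sub>R u + b s *\<^sub>R v) differentiable at x"
    proof -
      have EQ: "(vd ^^ Suc n) (\<lambda>s. a s *\<^sub>R u + b s *\<^sub>R v) y = (vd ^^ Suc n) a y *\<^sub>R u + (vd ^^ Suc n) b y *\<^sub>R v"
        if y: "y \<in> I" for y
      proof -
        have da: "((vd ^^ n) a has_vector_derivative (vd ^^ Suc n) a y) (at y)"
          using smooth1_works[OF \<open>smooth1_on I a\<close> y] .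
        have db: "((vd ^^ n) b has_vector_derivative (vd ^^ Suc n) b y) (at y)"
          using smooth1_works[OF \<open>smooth1_on I b\<close> y] .
        have D: "((\<lambda>s. (vd ^^ n) a s *\<^sub>R u + (vd ^^ n) b s *\<^sub>R v) has_vector_derivative
            (vd ^^ Suc n) a y *\<^sub>R u + (vd ^^ Suc n) b y *\<^sub>R v) (at y)"
          by (rule has_vector_derivative_add; rule has_vector_derivative_scaleR_left; rule da db)
        show ?thesis using vd_cong[OF I y e2] vd_eqI[OF D] by simp
      qed
      have Dx: "((\<lambda>s. (vd ^^ Suc n) a s *\<^sub>R u + (vd ^^ Suc n) b s *\<^sub>R v) has_vector_derivative
            (vd ^^ Suc (Suc n)) a x *\<^sub>R u + (vd ^^ Suc (Suc n)) b x *\<^sub>R v) (at x)"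
        by (rule has_vector_derivative_add[OF has_vector_derivative_scaleR_left[OF smooth1_works[OF that(1) Suc.prems, of "Suc n"]] has_vector_derivative_scaleR_left[OF smooth1_works[OF that(2) Suc.prems, of "Suc n"]]])
      have "((vd ^^ Suc n) (\<lambda>s. a s *\<^sub>R u + b s *\<^sub>R v) has_vector_derivative
            (vd ^^ Suc (Suc n)) a x *\<^sub>R u + (vd ^^ Suc (Suc n)) b x *\<^sub>R v) (at x)"
        by (rule has_vector_derivative_transform_within_open[OF Dx I Suc.prems]) (use EQ in simp)
      then show ?thesis using differentiableI_vector by blast
    qed
    ultimately show ?case by blast
  qed
  show ?thesis unfolding smooth1_on_def
  proof (intro allI ballI)
    fix n x assume xI: "x \<in> I"
    show "(vd ^^ n) f differentiable at x"
      using conjunct2[OF lin[OF f1 f2 xI, of n "axis 1 1" "axis 2 1"]] unfolding fg .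
  qed
qed


lemma hvd_nth:
  assumes "(h has_vector_derivative D) (at t)"
  shows "((\<lambda>\<tau>. h \<tau> $ i) has_vector_derivative D $ i) (at t)"
  using bounded_linear.has_derivative[OF bounded_linear_vec_nth[of i] assms[unfolded has_vector_derivative_def]]
  by (simp add: has_vector_derivative_def)

lemma C_inf_dt: "C_inf_on \<Omega> \<gamma> \<Longrightarrow> (t,s) \<in> \<Omega> \<Longrightarrow> ((\<lambda>\<tau>. pdiff bs \<gamma> (\<tau>,s)) has_vector_derivative pt (pdiff bs \<gamma>) (t,s)) (at t)"
  unfolding C_inf_on_def pt_at using vector_derivative_works by blast
lemma C_inf_ds: "C_inf_on \<Omega> \<gamma> \<Longrightarrow> (t,s) \<in> \<Omega> \<Longrightarrow> ((\<lambda>\<sigma>. pdiff bs \<gamma> (t,\<sigma>)) has_vector_derivative ps (pdiff bs \<gamma>) (t,s)) (at s)"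
  unfolding C_inf_on_def ps_at using vector_derivative_works by blast

lemma comp_pdiff:
  fixes \<gamma> :: "real \<times> real \<Rightarrow> real^2"
  assumes \<Omega>: "open \<Omega>" and C: "C_inf_on \<Omega> \<gamma>"
  shows "q \<in> \<Omega> \<Longrightarrow> pdiff bs (\<lambda>p. \<gamma> p $ i) q = pdiff bs \<gamma> q $ i"
proof (induction bs arbitrary: q)
  case Nil then show ?case by simp
next
  case (Cons b bs)
  obtain t s where q: "q = (t,s)" by fastforce
  show ?case
  proof (cases b)
    case True
    have "pdiff (b # bs) (\<lambda>p. \<gamma> p $ i) q = pt (\<lambda>p. pdiff bs \<gamma> p $ i) (t,s)"
      using pt_cong[OF \<Omega>, of "pdiff bs (\<lambda>p. \<gamma> p $ i)" "\<lambda>p. pdiff bs \<gamma> p $ i" t s] Cons True q by simp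
    also have "\<dots> = pt (pdiff bs \<gamma>) (t,s) $ i"
      by (rule pt_eqI) (use hvd_nth[OF C_inf_dt[OF C, of t s bs]] Cons.prems q in \<open>simp add: has_real_derivative_iff_has_vector_derivative\<close>)
    finally show ?thesis using True q by simp
  next
    case False
    have "pdiff (b # bs) (\<lambda>p. \<gamma> p $ i) q = ps (\<lambda>p. pdiff bs \<gamma> p $ i) (t,s)"
      using ps_cong[OF \<Omega>, of "pdiff bs (\<lambda>p. \<gamma> p $ i)" "\<lambda>p. pdiff bs \<gamma> p $ i" t s] Cons False q by simp
    also have "\<dots> = ps (pdiff bs \<gamma>) (t,s) $ i"
      by (rule ps_eqI) (use hvd_nth[OF C_inf_ds[OF C, of t s bs]] Cons.prems q in \<open>simp add: has_real_derivative_iff_has_vector_derivative\<close>)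
    finally show ?thesis using False q by simp
  qed
qed

lemma comp_Cinf:
  fixes \<gamma> :: "real \<times> real \<Rightarrow> real^2"
  assumes \<Omega>: "open \<Omega>" and C: "C_inf_on \<Omega> \<gamma>"
  shows "Cinf \<Omega> (pdiff bs (\<lambda>p. \<gamma> p $ i))"
proof -
  have cont: "continuous_on \<Omega> (pdiff bs (\<lambda>p. \<gamma> p $ i))" for bs
  proof -
    have "continuous_on \<Omega> (\<lambda>p. pdiff bs \<gamma> p $ i)"
      using C by (auto simp: C_inf_on_def intro!: continuous_on_component)
    then show ?thesis using continuous_on_cong[OF refl, of \<Omega> "pdiff bs (\<lambda>p. \<gamma> p $ i)" "\<lambda>p. pdiff bs \<gamma> p $ i"]
      comp_pdiff[OF \<Omega> C] by simp
  qed
  have pd: "pdiffable \<Omega> (pdiff bs (\<lambda>p. \<gamma> p $ i))" for bs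
    unfolding pdiffable_def
  proof (intro allI impI conjI)
    fix t s assume ts: "(t,s) \<in> \<Omega>"
    have e: "\<And>p. p \<in> \<Omega> \<Longrightarrow> pdiff bs \<gamma> p $ i = pdiff bs (\<lambda>p. \<gamma> p $ i) p"
      using comp_pdiff[OF \<Omega> C] by simp
    have D1: "(\<lambda>\<tau>. pdiff bs \<gamma> (\<tau>,s) $ i) differentiable at t"
      by (rule differentiableI_vector[OF hvd_nth[OF C_inf_dt[OF C ts, of bs]]])
    have D2: "(\<lambda>\<sigma>. pdiff bs \<gamma> (t,\<sigma>) $ i) differentiable at s"
      by (rule differentiableI_vector[OF hvd_nth[OF C_inf_ds[OF C ts, of bs]]])
    show "(\<lambda>\<tau>. pdiff bs (\<lambda>p. \<gamma> p $ i) (\<tau>,s)) differentiable at t"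
      using dt_cong[OF \<Omega> _ ts, of "\<lambda>p. pdiff bs \<gamma> p $ i"] e D1 by blast
    show "(\<lambda>\<sigma>. pdiff bs (\<lambda>p. \<gamma> p $ i) (t,\<sigma>)) differentiable at s"
      using ds_cong[OF \<Omega> _ ts, of "\<lambda>p. pdiff bs \<gamma> p $ i"] e D2 by blast
  qed
  have "Ck k \<Omega> (pdiff bs (\<lambda>p. \<gamma> p $ i))" for k bs
  proof (induction k arbitrary: bs)
    case 0 then show ?case using cont by simp
  next
    case (Suc k)
    have "Ck k \<Omega> (pdiff (True # bs) (\<lambda>p. \<gamma> p $ i))" "Ck k \<Omega> (pdiff (False # bs) (\<lambda>p. \<gamma> p $ i))"
      using Suc.IH by blast+
    then show ?case using cont pd by (intro Ck_SucI) auto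
  qed
  then show ?thesis by (simp add: Cinf_def)
qed

lemma local_extr:
  fixes T P :: "real \<Rightarrow> real"
  assumes I: "open I" and s0: "s0 \<in> I" and T: "\<And>s. s \<in> I \<Longrightarrow> (T has_real_derivative P s) (at s)"
    and P0: "P s0 = 0" and P': "(P has_real_derivative L) (at s0)" and L: "L \<noteq> 0"
  shows "\<exists>d>0. ball s0 d \<subseteq> I \<and> (\<forall>s. s \<noteq> s0 \<and> \<bar>s - s0\<bar> < d \<longrightarrow>
      P s \<noteq> 0 \<and> (L < 0 \<longrightarrow> T s < T s0) \<and> (L > 0 \<longrightarrow> T s > T s0))"
proof -
  obtain d0 where d0: "d0 > 0" "ball s0 d0 \<subseteq> I" using I s0 open_contains_ball by blast
  obtain d1 where d1: "d1 > 0" "\<And>h. h > 0 \<Longrightarrow> h < d1 \<Longrightarrow> (P (s0 + h) < 0 \<and> P (s0 - h) > 0) \<or> (P (s0 + h) > 0 \<and> P (s0 - h) < 0 \<and> L > 0)"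
      and sgn: "L < 0 \<Longrightarrow> (\<forall>h. h > 0 \<longrightarrow> h < d1 \<longrightarrow> P (s0 + h) < 0 \<and> P (s0 - h) > 0)"
      and sgn': "L > 0 \<Longrightarrow> (\<forall>h. h > 0 \<longrightarrow> h < d1 \<longrightarrow> P (s0 + h) > 0 \<and> P (s0 - h) < 0)"
  proof (cases "L < 0")
    case True
    obtain a where a: "a > 0" "\<forall>h>0. h < a \<longrightarrow> P s0 > P (s0 + h)" using DERIV_neg_dec_right[OF P' True] by blast
    obtain b where b: "b > 0" "\<forall>h>0. h < b \<longrightarrow> P s0 < P (s0 - h)" using DERIV_neg_dec_left[OF P' True] by blast
    show ?thesis by (rule that[of "min a b"]) (use a b P0 True in auto)
  next
    case False
    then have Lp: "L > 0" using L by simp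
    obtain a where a: "a > 0" "\<forall>h>0. h < a \<longrightarrow> P s0 < P (s0 + h)" using DERIV_pos_inc_right[OF P' Lp] by blast
    obtain b where b: "b > 0" "\<forall>h>0. h < b \<longrightarrow> P (s0 - h) < P s0" using DERIV_pos_inc_left[OF P' Lp] by blast
    show ?thesis by (rule that[of "min a b"]) (use a b P0 False Lp in auto)
  qed
  define d where "d = min d0 d1"
  have d: "d > 0" using d0 d1 by (simp add: d_def)
  have inI: "x \<in> I" if "\<bar>x - s0\<bar> < d" for x using d0(2) that by (auto simp: d_def dist_real_def)
  show ?thesis
  proof (intro exI[of _ d] conjI allI d)
    show "ball s0 d \<subseteq> I" using d0 by (auto simp: d_def)
    fix s show "s \<noteq> s0 \<and> \<bar>s - s0\<bar> < d \<longrightarrow> P s \<noteq> 0 \<and> (L < 0 \<longrightarrow> T s < T s0) \<and> (0 < L \<longrightarrow> T s0 < T s)"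
    proof (intro impI)
    assume s: "s \<noteq> s0 \<and> \<bar>s - s0\<bar> < d"
    have R1: "P s \<noteq> 0"
    proof (cases "s > s0")
      case True then show ?thesis using d1(2)[of "s - s0"] s by (auto simp: d_def)
    next
      case False then show ?thesis using d1(2)[of "s0 - s"] s by (auto simp: d_def)
    qed
    have mvt: "\<exists>z. min s0 s < z \<and> z < max s0 s \<and> T s - T s0 = (s - s0) * P z"
    proof (cases "s > s0")
      case True
      have "\<exists>z>s0. z < s \<and> T s - T s0 = (s - s0) * P z"
        by (rule MVT2[OF True]) (use T inI s True in \<open>auto simp: d_def\<close>)
      then show ?thesis using True by auto
    next
      case False
      then have lt: "s < s0" using s by auto
      have "\<exists>z>s. z < s0 \<and> T s0 - T s = (s0 - s) * P z"
        by (rule MVT2[OF lt]) (use T inI s lt in \<open>auto simp: d_def\<close>)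
      then show ?thesis using lt by (auto simp: algebra_simps)
    qed
    then obtain z where z: "min s0 s < z" "z < max s0 s" "T s - T s0 = (s - s0) * P z" by blast
    have zd: "\<bar>z - s0\<bar> < d1" using z s by (auto simp: d_def min_def max_def split: if_splits)
    have R2: "L < 0 \<longrightarrow> T s < T s0"
    proof
      assume Ln: "L < 0"
      show "T s < T s0"
      proof (cases "s > s0")
        case True
        then have "P z < 0" using sgn[OF Ln, rule_format, of "z - s0"] z zd by auto
        then show ?thesis using z True mult_pos_neg[of "s - s0" "P z"] by simp
      next
        case False
        then have "P z > 0" using sgn[OF Ln, rule_format, of "s0 - z"] z zd s by auto
        then show ?thesis using z False s mult_neg_pos[of "s - s0" "P z"] by simp
      qed
    qed
    have R3: "L > 0 \<longrightarrow> T s > T s0"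
    proof
      assume Lp: "L > 0"
      show "T s > T s0"
      proof (cases "s > s0")
        case True
        then have "P z > 0" using sgn'[OF Lp, rule_format, of "z - s0"] z zd by auto
        then show ?thesis using z True by (smt (verit) mult_pos_pos)
      next
        case False
        then have "P z < 0" using sgn'[OF Lp, rule_format, of "s0 - z"] z zd s by auto
        then show ?thesis using z False s mult_neg_neg[of "s - s0" "P z"] by simp
      qed
    qed
    show "P s \<noteq> 0 \<and> (L < 0 \<longrightarrow> T s < T s0) \<and> (0 < L \<longrightarrow> T s0 < T s)" using R1 R2 R3 by simp
    qed
  qed
qed


lemma perp_decomp:
  fixes xt yt a1 a2 :: real
  assumes "xt^2 + yt^2 = 1" "xt*a1 + yt*a2 = 0"
  shows "a1 = (a1*yt - a2*xt)*yt" "a2 = -(a1*yt - a2*xt)*xt"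
proof -
  have "(a1*yt - a2*xt)*yt - a1 = -a1*(1 - (xt^2+yt^2)) - xt*(xt*a1 + yt*a2)"
    by (simp add: power2_eq_square algebra_simps)
  then show "a1 = (a1*yt - a2*xt)*yt" using assms by simp
  have "-(a1*yt - a2*xt)*xt - a2 = -a2*(1 - (xt^2+yt^2)) - yt*(xt*a1 + yt*a2)"
    by (simp add: power2_eq_square algebra_simps)
  then show "a2 = -(a1*yt - a2*xt)*xt" using assms by simp
qed

lemma alg1:
  fixes xt yt a1 a2 b1 b2 :: real
  assumes "xt^2 + yt^2 = 1" "xt*a1 + yt*a2 = 0" "xt*b1 + yt*b2 = 0" "b1*yt - b2*xt \<noteq> 0"
  shows "(a1*yt - a2*xt) / (b1*yt - b2*xt) = (a1*b1 + a2*b2) / (b1^2 + b2^2)"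
proof -
  define k where "k = a1*yt - a2*xt"
  define m where "m = b1*yt - b2*xt"
  note A = perp_decomp[OF assms(1,2)] and B = perp_decomp[OF assms(1,3)]
  have m: "m \<noteq> 0" using assms(4) by (simp add: m_def)
  have "a1*b1 + a2*b2 = k*m*(xt^2+yt^2)"
    by (subst A(1), subst A(2), subst B(1), subst B(2)) (simp add: k_def m_def power2_eq_square algebra_simps)
  moreover have "b1^2 + b2^2 = m*m*(xt^2+yt^2)"
    by (subst B(1), subst B(2)) (simp add: m_def power2_eq_square algebra_simps)
  ultimately show ?thesis using assms(1) m by (simp add: k_def[symmetric] m_def[symmetric])
qed

lemma alg2:
  fixes xt yt xs ys :: real
  assumes "xt^2 + yt^2 > 0" "xt*xs + yt*ys = 0" "xs*yt - ys*xt = 0"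
  shows "xs = 0 \<and> ys = 0"
proof -
  have e1: "xs*(xt^2+yt^2) = xt*(xt*xs + yt*ys) + yt*(xs*yt - ys*xt)" by (simp add: power2_eq_square algebra_simps)
  have pos: "xt^2+yt^2 \<noteq> 0" using assms(1) by linarith
  have "xs*(xt^2+yt^2) = 0" unfolding e1 assms(2,3) by simp
  then have "xs = 0" using pos by (simp only: mult_eq_0_iff) simp
  moreover have e2: "ys*(xt^2+yt^2) = yt*(xt*xs + yt*ys) - xt*(xs*yt - ys*xt)" by (simp add: power2_eq_square algebra_simps)
  have "ys*(xt^2+yt^2) = 0" unfolding e2 assms(2,3) by simp
  then have "ys = 0" using pos by (simp only: mult_eq_0_iff) simp
  ultimately show ?thesis by simp
qed

lemma alg3:
  fixes xt yt a1 a2 b1 b2 :: real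
  assumes "xt^2 + yt^2 = 1" "xt*a1 + yt*a2 = 0" "xt*b1 + yt*b2 = 0" "a1 \<noteq> 0 \<or> a2 \<noteq> 0" "b1 \<noteq> 0 \<or> b2 \<noteq> 0"
  shows "a1*b1 + a2*b2 \<noteq> 0"
proof -
  define k where "k = a1*yt - a2*xt"
  define m where "m = b1*yt - b2*xt"
  note A = perp_decomp[OF assms(1,2)] and B = perp_decomp[OF assms(1,3)]
  have k: "k \<noteq> 0" using assms(4) A unfolding k_def by (metis minus_zero mult_zero_left)
  have m: "m \<noteq> 0" using assms(5) B unfolding m_def by (metis minus_zero mult_zero_left)
  have "a1*b1 + a2*b2 = k*m*(xt^2+yt^2)"
    by (subst A(1), subst A(2), subst B(1), subst B(2)) (simp add: k_def m_def power2_eq_square algebra_simps)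
  then show ?thesis using assms(1) k m by simp
qed

lemma alg4:
  fixes xt yt a1 a2 b1 b2 w1 w2 :: real
  assumes "xt^2 + yt^2 = 1" "xt*a1 + yt*a2 = 0" "xt*b1 + yt*b2 = 0"
    "2*(b1*a1 + b2*a2) + xt*w1 + yt*w2 = 0" "a1*yt - a2*xt \<noteq> 0" "b1*yt - b2*xt \<noteq> 0"
    "\<alpha>*a1 + \<beta>*w1 = 0" "\<alpha>*a2 + \<beta>*w2 = 0"
  shows "\<alpha> = 0 \<and> \<beta> = 0"
proof -
  define k where "k = a1*yt - a2*xt"
  define m where "m = b1*yt - b2*xt"
  note A = perp_decomp[OF assms(1,2)] and B = perp_decomp[OF assms(1,3)]
  have km: "k \<noteq> 0" "m \<noteq> 0" using assms(5,6) by (simp_all add: k_def m_def)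
  have "a1*b1 + a2*b2 = k*m*(xt^2+yt^2)"
    by (subst A(1), subst A(2), subst B(1), subst B(2)) (simp add: k_def m_def power2_eq_square algebra_simps)
  then have ab: "a1*b1 + a2*b2 = k*m" using assms(1) by simp
  have "0 = xt*(\<alpha>*a1 + \<beta>*w1) + yt*(\<alpha>*a2 + \<beta>*w2)" using assms(7,8) by simp
  also have "\<dots> = \<alpha>*(xt*a1 + yt*a2) + \<beta>*(xt*w1 + yt*w2)" by (simp add: algebra_simps)
  also have "\<dots> = \<beta>*(-2*(k*m))"
  proof -
    have "b1*a1 + b2*a2 = k*m" using ab by (simp add: mult.commute)
    then have w: "xt*w1 + yt*w2 = -2*(k*m)" using assms(4) by (smt (verit))
    show ?thesis unfolding w assms(2) by simp
  qed
  finally have b: "\<beta> = 0" using km by simp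
  then have "\<alpha>*a1 = 0" "\<alpha>*a2 = 0" using assms(7,8) by auto
  then have "\<alpha> = 0" using assms(5) by auto
  then show ?thesis using b by simp
qed

lemma vec2_hvd:
  fixes f :: "real \<Rightarrow> real^2"
  assumes "((\<lambda>s. f s $ 1) has_real_derivative a) (at x)" "((\<lambda>s. f s $ 2) has_real_derivative b) (at x)"
  shows "(f has_vector_derivative (a *\<^sub>R axis 1 1 + b *\<^sub>R axis 2 1)) (at x)"
proof -
  have fg: "(\<lambda>s. (\<lambda>s. f s $ 1) s *\<^sub>R (axis 1 1 :: real^2) + (\<lambda>s. f s $ 2) s *\<^sub>R axis 2 1) = f"
    by (rule ext) (rule vec2_decomp[symmetric])
  have "((\<lambda>s. (\<lambda>s. f s $ 1) s *\<^sub>R (axis 1 1 :: real^2) + (\<lambda>s. f s $ 2) s *\<^sub>R axis 2 1) has_vector_derivative (a *\<^sub>R axis 1 1 + b *\<^sub>R axis 2 1)) (at x)"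
    by (rule has_vector_derivative_add[OF has_vector_derivative_scaleR_left has_vector_derivative_scaleR_left])
       (use assms in \<open>simp_all add: has_real_derivative_iff_has_vector_derivative\<close>)
  then show ?thesis unfolding fg .
qed

lemma vec2_eq: "(v::real^2) = w \<longleftrightarrow> v $ 1 = w $ 1 \<and> v $ 2 = w $ 2"
  by (simp add: vec_eq_iff forall_2)
lemma axis_comps [simp]: "(axis 1 1 :: real^2) $ 1 = 1" "(axis 1 1 :: real^2) $ 2 = 0"
  "(axis 2 1 :: real^2) $ 1 = 0" "(axis 2 1 :: real^2) $ 2 = 1"
  by (simp_all add: axis_def)
lemma inner2: "inner (v::real^2) w = v$1 * w$1 + v$2 * w$2"
  by (simp add: inner_vec_def sum_2)
lemma norm2sq: "(norm (v::real^2))^2 = (v$1)^2 + (v$2)^2"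
  unfolding power2_norm_eq_inner inner2 by (simp add: power2_eq_square)

lemma Cps_add: "Cinf W f \<Longrightarrow> Cinf W g \<Longrightarrow> p \<in> W \<Longrightarrow> ps (\<lambda>p. f p + g p) p = ps f p + ps g p"
  using ps_add Cinf_pdiffable by blast
lemma Cpt_add: "Cinf W f \<Longrightarrow> Cinf W g \<Longrightarrow> p \<in> W \<Longrightarrow> pt (\<lambda>p. f p + g p) p = pt f p + pt g p"
  using pt_add Cinf_pdiffable by blast
lemma Cps_mult: "Cinf W f \<Longrightarrow> Cinf W g \<Longrightarrow> p \<in> W \<Longrightarrow> ps (\<lambda>p. f p * g p) p = ps f p * g p + f p * ps g p"
  using ps_mult Cinf_pdiffable by blast
lemma Cpt_mult: "Cinf W f \<Longrightarrow> Cinf W g \<Longrightarrow> p \<in> W \<Longrightarrow> pt (\<lambda>p. f p * g p) p = pt f p * g p + f p * pt g p"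
  using pt_mult Cinf_pdiffable by blast
lemma Cps_uminus: "Cinf W f \<Longrightarrow> p \<in> W \<Longrightarrow> ps (\<lambda>p. - f p) p = - ps f p"
  using ps_uminus Cinf_pdiffable by blast
lemma Cpt_uminus: "Cinf W f \<Longrightarrow> p \<in> W \<Longrightarrow> pt (\<lambda>p. - f p) p = - pt f p"
  using pt_uminus Cinf_pdiffable by blast
lemma Cps_diff: "open W \<Longrightarrow> Cinf W f \<Longrightarrow> Cinf W g \<Longrightarrow> p \<in> W \<Longrightarrow> ps (\<lambda>p. f p - g p) p = ps f p - ps g p"
  using Cps_add[of W f "\<lambda>p. - g p" p] Cps_uminus[of W g p] Cinf_uminus[of W g] by simp
lemma Cpt_diff: "open W \<Longrightarrow> Cinf W f \<Longrightarrow> Cinf W g \<Longrightarrow> p \<in> W \<Longrightarrow> pt (\<lambda>p. f p - g p) p = pt f p - pt g p"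
  using Cpt_add[of W f "\<lambda>p. - g p" p] Cpt_uminus[of W g p] Cinf_uminus[of W g] by simp
lemma Cps_cmult: "Cinf W f \<Longrightarrow> p \<in> W \<Longrightarrow> ps (\<lambda>p. c * f p) p = c * ps f p"
  using Cps_mult[of W "\<lambda>p. c" f p] Cinf_const by simp
lemma Cpt_cmult: "Cinf W f \<Longrightarrow> p \<in> W \<Longrightarrow> pt (\<lambda>p. c * f p) p = c * pt f p"
  using Cpt_mult[of W "\<lambda>p. c" f p] Cinf_const by simp

lemma zero_ps: "open W \<Longrightarrow> (\<And>q. q \<in> W \<Longrightarrow> F q = 0) \<Longrightarrow> p \<in> W \<Longrightarrow> ps F p = (0::real)"
  using ps_cong[of W F "\<lambda>p. 0" "fst p" "snd p"] by simp
lemma zero_pt: "open W \<Longrightarrow> (\<And>q. q \<in> W \<Longrightarrow> F q = 0) \<Longrightarrow> p \<in> W \<Longrightarrow> pt F p = (0::real)"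
  using pt_cong[of W F "\<lambda>p. 0" "fst p" "snd p"] by simp


theorem proposition3p2:
  fixes \<Omega> :: "(real \<times> real) set" and \<gamma> :: "real \<times> real \<Rightarrow> real^2" and t0 s0 :: real
  assumes "open \<Omega>" and "C_inf_on \<Omega> \<gamma>"
    and wave: "\<forall>p\<in>\<Omega>. pt (pt \<gamma>) p = ps (ps \<gamma>) p"
    and orth: "\<forall>p\<in>\<Omega>. inner (pt \<gamma> p) (ps \<gamma> p) = 0"
    and conf: "\<forall>p\<in>\<Omega>. (norm (pt \<gamma> p))\<^sup>2 + (norm (ps \<gamma> p))\<^sup>2 = 1"
    and "(t0, s0) \<in> \<Omega>" and "ps \<gamma> (t0, s0) = 0" and "ps (pt \<gamma>) (t0, s0) \<noteq> 0"
  shows "\<exists>\<epsilon>>0. \<exists>\<delta>>0. \<exists>T :: real \<Rightarrow> real.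
     (let I = {s0 - \<delta> <..< s0 + \<delta>}; c = (\<lambda>s. (T s, \<gamma> (T s, s))) in
       {t0 - \<epsilon> <..< t0 + \<epsilon>} \<times> I \<subseteq> \<Omega>
     \<and> smooth1_on I T \<and> T s0 = t0 \<and> (\<forall>s\<in>I. \<bar>T s - t0\<bar> < \<epsilon>)
     \<and> (\<forall>s\<in>I. vd T s = - inner (ps (ps \<gamma>) (T s, s)) (ps (pt \<gamma>) (T s, s))
                          / (norm (ps (pt \<gamma>) (T s, s)))\<^sup>2)
     \<and> (\<forall>t s. \<bar>t - t0\<bar> < \<epsilon> \<and> s \<in> I \<longrightarrow> (ps \<gamma> (t, s) = 0 \<longleftrightarrow> t = T s))
     \<and> smooth1_on I c \<and> (\<forall>s\<in>I. mink (vd c s) = 0)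
     \<and> (ps (ps \<gamma>) (t0, s0) = 0 \<and> ps (ps (ps \<gamma>)) (t0, s0) \<noteq> 0 \<longrightarrow>
          (\<forall>s\<in>I. s \<noteq> s0 \<longrightarrow> slice_cusp \<gamma> (T s) s)
        \<and> (inner (ps (ps (ps \<gamma>)) (t0, s0)) (ps (pt \<gamma>) (t0, s0)) > 0 \<longrightarrow>
             (\<forall>s\<in>I. s \<noteq> s0 \<longrightarrow> T s < t0))
        \<and> (inner (ps (ps (ps \<gamma>)) (t0, s0)) (ps (pt \<gamma>) (t0, s0)) < 0 \<longrightarrow>
             (\<forall>s\<in>I. s \<noteq> s0 \<longrightarrow> T s > t0))
        \<and> (\<forall>s\<in>I. s \<noteq> s0 \<longrightarrow> vd c s \<noteq> 0)
        \<and> curve_cusp c s0))"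
proof -
  note \<Omega> = assms(1) and C = assms(2) and p0 = assms(6) and sing0 = assms(7) and nz0 = assms(8)
  define X where "X = (\<lambda>p. \<gamma> p $ 1)"
  define Y where "Y = (\<lambda>p. \<gamma> p $ 2)"
  have cX: "Cinf \<Omega> X" using comp_Cinf[OF \<Omega> C, of "[]" 1] by (simp add: X_def)
  have cY: "Cinf \<Omega> Y" using comp_Cinf[OF \<Omega> C, of "[]" 2] by (simp add: Y_def)
  have compX: "\<And>bs q. q \<in> \<Omega> \<Longrightarrow> pdiff bs X q = pdiff bs \<gamma> q $ 1" using comp_pdiff[OF \<Omega> C] by (simp add: X_def)
  have compY: "\<And>bs q. q \<in> \<Omega> \<Longrightarrow> pdiff bs Y q = pdiff bs \<gamma> q $ 2" using comp_pdiff[OF \<Omega> C] by (simp add: Y_def)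
  have CX: "pt X q = pt \<gamma> q $ 1" "ps X q = ps \<gamma> q $ 1" "ps (ps X) q = ps (ps \<gamma>) q $ 1"
     "ps (pt X) q = ps (pt \<gamma>) q $ 1" "ps (ps (ps X)) q = ps (ps (ps \<gamma>)) q $ 1" if "q \<in> \<Omega>" for q
    using compX[OF that, of "[True]"] compX[OF that, of "[False]"] compX[OF that, of "[False,False]"]
      compX[OF that, of "[False,True]"] compX[OF that, of "[False,False,False]"] by simp_all
  have CY: "pt Y q = pt \<gamma> q $ 2" "ps Y q = ps \<gamma> q $ 2" "ps (ps Y) q = ps (ps \<gamma>) q $ 2"
     "ps (pt Y) q = ps (pt \<gamma>) q $ 2" "ps (ps (ps Y)) q = ps (ps (ps \<gamma>)) q $ 2" if "q \<in> \<Omega>" for q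
    using compY[OF that, of "[True]"] compY[OF that, of "[False]"] compY[OF that, of "[False,False]"]
      compY[OF that, of "[False,True]"] compY[OF that, of "[False,False,False]"] by simp_all
  note cinf = cX cY Cinf_pt Cinf_ps Cinf_mult[OF \<Omega>] Cinf_add[OF \<Omega>] Cinf_diff[OF \<Omega>] Cinf_uminus[OF \<Omega>] Cinf_const
  have OF: "pt X q * ps X q + pt Y q * ps Y q = 0" if "q \<in> \<Omega>" for q
    using orth that by (simp add: inner2 CX CY)
  have CF: "pt X q * pt X q + pt Y q * pt Y q + ps X q * ps X q + ps Y q * ps Y q - 1 = 0" if "q \<in> \<Omega>" for q
  proof -
    have "(norm (pt \<gamma> q))\<^sup>2 + (norm (ps \<gamma> q))\<^sup>2 = 1" using conf that by simp
    then show ?thesis unfolding norm2sq using that by (simp add: CX CY power2_eq_square)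
  qed
  have s1: "(pt X q)^2 + (pt Y q)^2 = 1" if "q \<in> \<Omega>" "ps X q = 0" "ps Y q = 0" for q
    using CF[OF that(1)] that by (simp add: power2_eq_square)
  have psOF: "ps (pt X) q * ps X q + pt X q * ps (ps X) q + (ps (pt Y) q * ps Y q + pt Y q * ps (ps Y) q) = 0"
    if "q \<in> \<Omega>" for q
  proof -
    have "ps (\<lambda>q. pt X q * ps X q + pt Y q * ps Y q) q = 0" by (rule zero_ps[OF \<Omega> OF that])
    moreover have "ps (\<lambda>q. pt X q * ps X q + pt Y q * ps Y q) q =
      ps (pt X) q * ps X q + pt X q * ps (ps X) q + (ps (pt Y) q * ps Y q + pt Y q * ps (ps Y) q)"
      using that by (simp add: Cps_add[of \<Omega>] Cps_mult[of \<Omega>] cinf)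
    ultimately show ?thesis by simp
  qed
  have s_b: "pt X q * ps (ps X) q + pt Y q * ps (ps Y) q = 0" if "q \<in> \<Omega>" "ps X q = 0" "ps Y q = 0" for q
    using psOF[OF that(1)] that by simp
  have s_b2: "pt X q * ps (pt X) q + pt Y q * ps (pt Y) q = 0" if "q \<in> \<Omega>" "ps X q = 0" "ps Y q = 0" for q
  proof -
    have "ps (\<lambda>q. pt X q * pt X q + pt Y q * pt Y q + ps X q * ps X q + ps Y q * ps Y q - 1) q = 0"
      by (rule zero_ps[OF \<Omega> CF that(1)])
    moreover have "ps (\<lambda>q. pt X q * pt X q + pt Y q * pt Y q + ps X q * ps X q + ps Y q * ps Y q - 1) q =
      (ps (pt X) q * pt X q + pt X q * ps (pt X) q) + (ps (pt Y) q * pt Y q + pt Y q * ps (pt Y) q)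
      + (ps (ps X) q * ps X q + ps X q * ps (ps X) q) + (ps (ps Y) q * ps Y q + ps Y q * ps (ps Y) q)"
      using that(1) by (simp add: Cps_add[of \<Omega>] Cps_mult[of \<Omega>] Cps_diff[OF \<Omega>] cinf)
    ultimately show ?thesis using that by (simp add: algebra_simps)
  qed
  have s_c: "2*(ps (pt X) q * ps (ps X) q + ps (pt Y) q * ps (ps Y) q) + pt X q * ps (ps (ps X)) q + pt Y q * ps (ps (ps Y)) q = 0"
    if "q \<in> \<Omega>" "ps X q = 0" "ps Y q = 0" for q
  proof -
    define E where "E p = ps (pt X) p * ps X p + pt X p * ps (ps X) p + (ps (pt Y) p * ps Y p + pt Y p * ps (ps Y) p)" for p
    have "ps E q = 0" by (rule zero_ps[OF \<Omega> psOF[folded E_def] that(1)])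
    moreover have "ps E q = (ps (ps (pt X)) q * ps X q + ps (pt X) q * ps (ps X) q + (ps (pt X) q * ps (ps X) q + pt X q * ps (ps (ps X)) q))
       + (ps (ps (pt Y)) q * ps Y q + ps (pt Y) q * ps (ps Y) q + (ps (pt Y) q * ps (ps Y) q + pt Y q * ps (ps (ps Y)) q))"
      unfolding E_def using that(1) by (simp add: Cps_add[of \<Omega>] Cps_mult[of \<Omega>] cinf)
    ultimately show ?thesis using that by (simp add: algebra_simps)
  qed
  define h where "h p = ps X p * pt Y p - ps Y p * pt X p" for p
  have ch: "Cinf \<Omega> h" unfolding h_def by (simp add: cinf)
  have pth: "pt h q = pt (ps X) q * pt Y q + ps X q * pt (pt Y) q - (pt (ps Y) q * pt X q + ps Y q * pt (pt X) q)"
    if "q \<in> \<Omega>" for q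
    unfolding h_def using that by (simp add: Cpt_add[of \<Omega>] Cpt_mult[of \<Omega>] Cpt_diff[OF \<Omega>] cinf)
  have psh: "ps h q = ps (ps X) q * pt Y q + ps X q * ps (pt Y) q - (ps (ps Y) q * pt X q + ps Y q * ps (pt X) q)"
    if "q \<in> \<Omega>" for q
    unfolding h_def using that by (simp add: Cps_add[of \<Omega>] Cps_mult[of \<Omega>] Cps_diff[OF \<Omega>] cinf)
  have clX: "pt (ps X) q = ps (pt X) q" if "q \<in> \<Omega>" for q using Cinf_clairaut[OF \<Omega> cX that] by simp
  have clY: "pt (ps Y) q = ps (pt Y) q" if "q \<in> \<Omega>" for q using Cinf_clairaut[OF \<Omega> cY that] by simp
  have pth_s: "pt h q = ps (pt X) q * pt Y q - ps (pt Y) q * pt X q" if "q \<in> \<Omega>" "ps X q = 0" "ps Y q = 0" for q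
    using pth[OF that(1)] that clX[OF that(1)] clY[OF that(1)] by simp
  have psh_s: "ps h q = ps (ps X) q * pt Y q - ps (ps Y) q * pt X q" if "q \<in> \<Omega>" "ps X q = 0" "ps Y q = 0" for q
    using psh[OF that(1)] that by simp
  define q0 where "q0 = (t0, s0)"
  have q0: "q0 \<in> \<Omega>" "ps X q0 = 0" "ps Y q0 = 0" using p0 sing0 CX CY by (auto simp: q0_def)
  have a0: "pt h q0 \<noteq> 0"
  proof
    assume "pt h q0 = 0"
    then have k0: "ps (pt X) q0 * pt Y q0 - ps (pt Y) q0 * pt X q0 = 0" using pth_s[OF q0] by simp
    note D = perp_decomp[OF s1[OF q0] s_b2[OF q0]]
    have "ps (pt X) q0 = 0" using D(1) unfolding k0 by simp
    moreover have "ps (pt Y) q0 = 0" using D(2) unfolding k0 by simp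
    ultimately
    have "ps (pt \<gamma>) q0 = 0" using CX CY q0 by (simp add: vec2_eq)
    then show False using nz0 by (simp add: q0_def)
  qed
  define \<sigma> where "\<sigma> = sgn (pt h q0)"
  have \<sigma>: "\<sigma> \<noteq> 0" "\<sigma> * pt h q0 > 0" using a0 by (auto simp: \<sigma>_def sgn_real_def)
  define H where "H p = \<sigma> * h p" for p
  have cH: "Cinf \<Omega> H" unfolding H_def by (simp add: cinf ch)
  have ptH: "pt H q = \<sigma> * pt h q" if "q \<in> \<Omega>" for q unfolding H_def using Cpt_cmult[OF ch that] .
  have psH: "ps H q = \<sigma> * ps h q" if "q \<in> \<Omega>" for q unfolding H_def using Cps_cmult[OF ch that] .
  define F where "F p = min (pt H p) ((pt X p)^2 + (pt Y p)^2)" for p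
  define W where "W = \<Omega> \<inter> F -` {0<..}"
  have contF: "continuous_on \<Omega> F" unfolding F_def
    using Cinf_cont[OF Cinf_pt[OF cH]] Cinf_cont[OF Cinf_pt[OF cX]] Cinf_cont[OF Cinf_pt[OF cY]]
    by (intro continuous_intros) auto
  have W: "open W" unfolding W_def by (rule continuous_open_preimage[OF contF \<Omega>]) simp
  have WO: "W \<subseteq> \<Omega>" by (auto simp: W_def)
  have Wpos: "pt H p > 0" "(pt X p)^2 + (pt Y p)^2 > 0" if "p \<in> W" for p
    using that by (auto simp: W_def F_def)
  have hW: "pt h p \<noteq> 0" if "p \<in> W" for p using Wpos(1)[OF that] ptH[of p] that WO by auto
  have q0W: "q0 \<in> W" unfolding W_def F_def using q0 \<sigma> ptH[OF q0(1)] s1[OF q0] by simp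
  have H0: "H (t0, s0) = 0" using q0 by (simp add: H_def h_def q0_def)
  have CkH: "Ck (Suc 0) W H" using Cinf_subset[OF cH WO] by (simp add: Cinf_def)
  obtain \<epsilon> \<delta> T where \<epsilon>: "\<epsilon> > 0" and \<delta>: "\<delta> > 0"
    and box: "{t0-\<epsilon>..t0+\<epsilon>} \<times> {s0-\<delta><..<s0+\<delta>} \<subseteq> W" and Ts0: "T s0 = t0"
    and Tprop: "\<forall>s\<in>{s0-\<delta><..<s0+\<delta>}. \<bar>T s - t0\<bar> < \<epsilon> \<and> H (T s, s) = 0 \<and>
         (T has_real_derivative - ps H (T s, s) / pt H (T s, s)) (at s)"
    and Tzero: "\<forall>t s. \<bar>t - t0\<bar> \<le> \<epsilon> \<and> s \<in> {s0-\<delta><..<s0+\<delta>} \<longrightarrow> (H (t,s) = 0 \<longleftrightarrow> t = T s)"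
    using ift[OF W CkH q0W[unfolded q0_def] H0 Wpos(1)] by blast
  define I where "I = {s0-\<delta><..<s0+\<delta>}"
  have openI: "open I" by (simp add: I_def)
  have s0I: "s0 \<in> I" using \<delta> by (simp add: I_def)
  have inW: "(t, s) \<in> W" if "\<bar>t - t0\<bar> \<le> \<epsilon>" "s \<in> I" for t s
    using box that by (auto simp: I_def abs_le_iff)
  have curveW: "(T s, s) \<in> W" if "s \<in> I" for s
  proof -
    have "\<bar>T s - t0\<bar> < \<epsilon>" using Tprop that by (simp add: I_def)
    then show ?thesis using inW[OF _ that] by simp
  qed
  have curveO: "(T s, s) \<in> \<Omega>" if "s \<in> I" for s using curveW that WO by auto
  define \<Phi> where "\<Phi> p = - ps h p / pt h p" for p
  have c\<Phi>: "Cinf W \<Phi>" unfolding \<Phi>_def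
    using Cinf_subset[OF ch WO] hW
    by (intro Cinf_divide[OF W] Cinf_uminus[OF W] Cinf_ps Cinf_pt) auto
  have sing: "ps X q = 0 \<and> ps Y q = 0" if "q \<in> W" "h q = 0" for q
    using alg2[OF Wpos(2)[OF that(1)] OF[of q] that(2)[unfolded h_def]] that WO by auto
  have curve_sing: "ps X (T s, s) = 0" "ps Y (T s, s) = 0" if "s \<in> I" for s
    using sing[OF curveW[OF that]] Tprop that \<sigma>(1) by (auto simp: I_def H_def)
  have DT: "(T has_real_derivative \<Phi> (T s, s)) (at s)" if "s \<in> I" for s
  proof -
    have eq: "- ps H (T s, s) / pt H (T s, s) = \<Phi> (T s, s)"
      using ptH psH curveO[OF that] \<sigma>(1) by (simp add: \<Phi>_def)
    have sI: "s \<in> {s0-\<delta><..<s0+\<delta>}" using that by (simp add: I_def)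
    show ?thesis using conjunct2[OF conjunct2[OF bspec[OF Tprop sI]]] unfolding eq .
  qed
  have \<Phi>_formula: "\<Phi> (T s, s) = - inner (ps (ps \<gamma>) (T s, s)) (ps (pt \<gamma>) (T s, s)) / (norm (ps (pt \<gamma>) (T s, s)))\<^sup>2"
    if "s \<in> I" for s
  proof -
    define q where "q = (T s, s)"
    have q: "q \<in> \<Omega>" "ps X q = 0" "ps Y q = 0" "q \<in> W" using curveO curve_sing curveW that by (auto simp: q_def)
    have "ps h q / pt h q = (ps (ps X) q * ps (pt X) q + ps (ps Y) q * ps (pt Y) q) / ((ps (pt X) q)^2 + (ps (pt Y) q)^2)"
      unfolding pth_s[OF q(1-3)] psh_s[OF q(1-3)]
      by (rule alg1[OF s1[OF q(1-3)] s_b[OF q(1-3)] s_b2[OF q(1-3)]]) (use hW[OF q(4)] pth_s[OF q(1-3)] in simp)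
    then show ?thesis unfolding q_def[symmetric] \<Phi>_def using q(1)
      by (simp add: inner2 norm2sq CX CY add_divide_distrib diff_divide_distrib)
  qed
  have DTW: "(T s, s) \<in> W \<and> (T has_real_derivative \<Phi> (T s, s)) (at s)" if "s \<in> I" for s
    using curveW DT that by blast
  have cXW: "Cinf W X" and cYW: "Cinf W Y" using Cinf_subset[OF cX WO] Cinf_subset[OF cY WO] by auto
  have smT: "smooth1_on I T"
    using smooth_along[OF W c\<Phi> openI DTW Cinf_fst] by simp
  have smX: "smooth1_on I (\<lambda>s. \<gamma> (T s, s) $ 1)"
    using smooth_along[OF W c\<Phi> openI DTW cXW] by (simp add: X_def)
  have smY: "smooth1_on I (\<lambda>s. \<gamma> (T s, s) $ 2)"
    using smooth_along[OF W c\<Phi> openI DTW cYW] by (simp add: Y_def)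
  have smc: "smooth1_on I (\<lambda>s. (T s, \<gamma> (T s, s)))"
    by (rule smooth1_pair[OF openI smT smooth1_vec2[OF openI smX smY]])
  have psg0: "ps \<gamma> (T s, s) = 0" if "s \<in> I" for s
    using curve_sing[OF that] CX CY curveO[OF that] by (simp add: vec2_eq)
  have Dgam: "((\<lambda>s. \<gamma> (T s, s)) has_vector_derivative \<Phi> (T s, s) *\<^sub>R pt \<gamma> (T s, s)) (at s)" if "s \<in> I" for s
  proof -
    have dx: "((\<lambda>s. \<gamma> (T s, s) $ 1) has_real_derivative pt X (T s, s) * \<Phi> (T s, s)) (at s)"
      using Cinf_chain_T[OF W cXW curveW[OF that] DT[OF that]] curve_sing[OF that] by (simp add: X_def)
    have dy: "((\<lambda>s. \<gamma> (T s, s) $ 2) has_real_derivative pt Y (T s, s) * \<Phi> (T s, s)) (at s)"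
      using Cinf_chain_T[OF W cYW curveW[OF that] DT[OF that]] curve_sing[OF that] by (simp add: Y_def)
    have "(pt X (T s, s) * \<Phi> (T s, s)) *\<^sub>R axis 1 1 + (pt Y (T s, s) * \<Phi> (T s, s)) *\<^sub>R axis 2 1
        = \<Phi> (T s, s) *\<^sub>R pt \<gamma> (T s, s)"
      using CX CY curveO[OF that] by (simp add: vec2_eq)
    then show ?thesis using vec2_hvd[OF dx dy] by simp
  qed
  have vdc: "vd (\<lambda>s. (T s, \<gamma> (T s, s))) s = (\<Phi> (T s, s), \<Phi> (T s, s) *\<^sub>R pt \<gamma> (T s, s))" if "s \<in> I" for s
    by (rule vd_eqI, rule has_vector_derivative_Pair)
       (use DT[OF that] Dgam[OF that] in \<open>simp_all add: has_real_derivative_iff_has_vector_derivative\<close>)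
  have normG: "norm (pt \<gamma> (T s, s)) = 1" if "s \<in> I" for s
  proof -
    have "(norm (pt \<gamma> (T s, s)))\<^sup>2 + (norm (ps \<gamma> (T s, s)))\<^sup>2 = 1" using conf curveO[OF that] by blast
    then have "(norm (pt \<gamma> (T s, s)))\<^sup>2 = 1" using psg0[OF that] by simp
    then show ?thesis using norm_ge_zero[of "pt \<gamma> (T s, s)"] by (simp add: power2_eq_1_iff)
  qed
  have null: "mink (vd (\<lambda>s. (T s, \<gamma> (T s, s))) s) = 0" if "s \<in> I" for s
    using vdc[OF that] normG[OF that] by (simp add: mink_def power_mult_distrib)
  have zeroset: "ps \<gamma> (t, s) = 0 \<longleftrightarrow> t = T s" if "\<bar>t - t0\<bar> < \<epsilon>" "s \<in> I" for t s
  proof -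
    have tsW: "(t,s) \<in> W" using inW that by simp
    have "ps \<gamma> (t, s) = 0 \<longleftrightarrow> ps X (t,s) = 0 \<and> ps Y (t,s) = 0" using CX CY tsW WO by (auto simp: vec2_eq)
    also have "\<dots> \<longleftrightarrow> h (t,s) = 0" using sing[OF tsW] by (auto simp: h_def)
    also have "\<dots> \<longleftrightarrow> H (t,s) = 0" using \<sigma>(1) by (simp add: H_def)
    also have "\<dots> \<longleftrightarrow> t = T s" using Tzero that by (simp add: I_def)
    finally show ?thesis .
  qed
  have smsub: "smooth1_on J f" if "smooth1_on I f" "J \<subseteq> I" for J and f :: "real \<Rightarrow> 'z::real_normed_vector"
    using that by (auto simp: smooth1_on_def)
  have basic: "{t0 - \<epsilon> <..< t0 + \<epsilon>} \<times> {s0 - \<delta>' <..< s0 + \<delta>'} \<subseteq> \<Omega>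
     \<and> smooth1_on {s0 - \<delta>' <..< s0 + \<delta>'} T \<and> T s0 = t0 \<and> (\<forall>s\<in>{s0 - \<delta>' <..< s0 + \<delta>'}. \<bar>T s - t0\<bar> < \<epsilon>)
     \<and> (\<forall>s\<in>{s0 - \<delta>' <..< s0 + \<delta>'}. vd T s = - inner (ps (ps \<gamma>) (T s, s)) (ps (pt \<gamma>) (T s, s))
                          / (norm (ps (pt \<gamma>) (T s, s)))\<^sup>2)
     \<and> (\<forall>t s. \<bar>t - t0\<bar> < \<epsilon> \<and> s \<in> {s0 - \<delta>' <..< s0 + \<delta>'} \<longrightarrow> (ps \<gamma> (t, s) = 0 \<longleftrightarrow> t = T s))
     \<and> smooth1_on {s0 - \<delta>' <..< s0 + \<delta>'} (\<lambda>s. (T s, \<gamma> (T s, s)))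
     \<and> (\<forall>s\<in>{s0 - \<delta>' <..< s0 + \<delta>'}. mink (vd (\<lambda>s. (T s, \<gamma> (T s, s))) s) = 0)"
    if "0 < \<delta>'" "\<delta>' \<le> \<delta>" for \<delta>'
  proof -
    have sub: "{s0 - \<delta>' <..< s0 + \<delta>'} \<subseteq> I" using that by (auto simp: I_def)
    have b1: "{t0 - \<epsilon> <..< t0 + \<epsilon>} \<times> {s0 - \<delta>' <..< s0 + \<delta>'} \<subseteq> \<Omega>"
      using inW sub WO by (force simp: abs_less_iff)
    have b4: "\<forall>s\<in>{s0 - \<delta>' <..< s0 + \<delta>'}. \<bar>T s - t0\<bar> < \<epsilon>" using Tprop sub by (auto simp: I_def)
    have b5: "\<forall>s\<in>{s0 - \<delta>' <..< s0 + \<delta>'}. vd T s = - inner (ps (ps \<gamma>) (T s, s)) (ps (pt \<gamma>) (T s, s))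
                          / (norm (ps (pt \<gamma>) (T s, s)))\<^sup>2"
      using vd_real_eqI[OF DT] \<Phi>_formula sub by auto
    show ?thesis using b1 b4 b5 smsub[OF smT sub] smsub[OF smc sub] Ts0 zeroset null sub by blast
  qed
  show ?thesis
  proof (cases "ps (ps \<gamma>) (t0, s0) = 0 \<and> ps (ps (ps \<gamma>)) (t0, s0) \<noteq> 0")
    case False
    show ?thesis
      apply (rule exI[of _ \<epsilon>], rule conjI[OF \<epsilon>], rule exI[of _ \<delta>], rule conjI[OF \<delta>], rule exI[of _ T])
      unfolding Let_def using basic[OF \<delta> order_refl] False by blast
  next
    case True
    have q0T: "(T s0, s0) = q0" using Ts0 by (simp add: q0_def)
    have hss0: "ps (ps X) q0 = 0" "ps (ps Y) q0 = 0" using True CX CY q0(1) by (auto simp: q0_def vec2_eq)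
    have hsss0: "ps (ps (ps X)) q0 \<noteq> 0 \<or> ps (ps (ps Y)) q0 \<noteq> 0" using True CX CY q0(1) by (auto simp: q0_def vec2_eq)
    have q0W': "q0 \<in> W" by (rule q0W)
    define P where "P s = \<Phi> (T s, s)" for s
    have P0: "P s0 = 0" unfolding P_def q0T \<Phi>_def using psh_s[OF q0] hss0 by simp
    define Q1 where "Q1 p = pt \<Phi> p * \<Phi> p + ps \<Phi> p" for p
    have cQ1: "Cinf W Q1" unfolding Q1_def by (intro Cinf_add[OF W] Cinf_mult[OF W] Cinf_pt Cinf_ps c\<Phi>)
    have DP: "(P has_real_derivative Q1 (T s, s)) (at s)" if "s \<in> I" for s
      using Cinf_chain_T[OF W c\<Phi> curveW[OF that] DT[OF that]] unfolding P_def[abs_def] Q1_def by simp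
    have DT': "(T has_real_derivative P s) (at s)" if "s \<in> I" for s using DT[OF that] by (simp add: P_def)
    have chW: "Cinf W h" using Cinf_subset[OF ch WO] .
    have ps\<Phi>0: "ps \<Phi> q0 = - ps (ps h) q0 / pt h q0"
    proof -
      have eqf: "\<Phi> = (\<lambda>p. (- ps h p) * inverse (pt h p))" by (rule ext) (simp add: \<Phi>_def divide_inverse)
      have pdi: "pdiffable W (pt h)" using Cinf_pdiffable[OF Cinf_pt[OF chW]] .
      have "ps (\<lambda>p. (- ps h p) * inverse (pt h p)) q0 =
          ps (\<lambda>p. - ps h p) q0 * inverse (pt h q0) + (- ps h q0) * ps (\<lambda>p. inverse (pt h p)) q0"
        by (rule ps_mult[OF _ _ q0W']) (use Cinf_pdiffable[OF Cinf_uminus[OF W Cinf_ps[OF chW]]] pdiffable_inverse[OF pdi hW] in auto)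
      moreover have "ps (\<lambda>p. - ps h p) q0 = - ps (ps h) q0"
        by (rule Cps_uminus[OF Cinf_ps[OF chW] q0W'])
      moreover have "ps h q0 = 0" using psh_s[OF q0] hss0 by simp
      ultimately show ?thesis unfolding eqf by (simp add: divide_inverse)
    qed
    have pssh0: "ps (ps h) q0 = ps (ps (ps X)) q0 * pt Y q0 - ps (ps (ps Y)) q0 * pt X q0"
    proof -
      define E where "E p = ps (ps X) p * pt Y p + ps X p * ps (pt Y) p - (ps (ps Y) p * pt X p + ps Y p * ps (pt X) p)" for p
      have "ps (ps h) q0 = ps E q0"
        by (rule ps_cong[OF \<Omega> _ q0(1)[unfolded q0_def], folded q0_def]) (use psh in \<open>simp add: E_def\<close>)
      also have "\<dots> = (ps (ps (ps X)) q0 * pt Y q0 + ps (ps X) q0 * ps (pt Y) q0 + (ps (ps X) q0 * ps (pt Y) q0 + ps X q0 * ps (ps (pt Y)) q0))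
          - ((ps (ps (ps Y)) q0 * pt X q0 + ps (ps Y) q0 * ps (pt X) q0) + (ps (ps Y) q0 * ps (pt X) q0 + ps Y q0 * ps (ps (pt X)) q0))"
        unfolding E_def using q0(1) by (simp add: Cps_add[of \<Omega>] Cps_mult[of \<Omega>] Cps_diff[OF \<Omega>] cinf)
      finally show ?thesis using q0 hss0 by simp
    qed
    define L where "L = Q1 q0"
    have L_val: "L = - ps (ps h) q0 / pt h q0"
      unfolding L_def Q1_def using ps\<Phi>0 P0 by (simp add: P_def q0T)
    have sc0: "pt X q0 * ps (ps (ps X)) q0 + pt Y q0 * ps (ps (ps Y)) q0 = 0"
      using s_c[OF q0] hss0 by simp
    have L_formula: "L = - inner (ps (ps (ps \<gamma>)) (t0, s0)) (ps (pt \<gamma>) (t0, s0)) / (norm (ps (pt \<gamma>) (t0, s0)))\<^sup>2"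
    proof -
      have "(ps (ps (ps X)) q0 * pt Y q0 - ps (ps (ps Y)) q0 * pt X q0) / (ps (pt X) q0 * pt Y q0 - ps (pt Y) q0 * pt X q0)
          = (ps (ps (ps X)) q0 * ps (pt X) q0 + ps (ps (ps Y)) q0 * ps (pt Y) q0) / ((ps (pt X) q0)^2 + (ps (pt Y) q0)^2)"
        by (rule alg1[OF s1[OF q0] sc0 s_b2[OF q0]]) (use a0 pth_s[OF q0] in simp)
      then show ?thesis unfolding L_val pssh0 pth_s[OF q0] using q0(1)
        by (simp add: q0_def inner2 norm2sq CX CY add_divide_distrib diff_divide_distrib)
    qed
    have inner_ne: "inner (ps (ps (ps \<gamma>)) (t0, s0)) (ps (pt \<gamma>) (t0, s0)) \<noteq> 0"
    proof -
      have nz: "ps (pt X) q0 \<noteq> 0 \<or> ps (pt Y) q0 \<noteq> 0" using nz0 CX CY q0(1) by (auto simp: q0_def vec2_eq)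
      have "ps (ps (ps X)) q0 * ps (pt X) q0 + ps (ps (ps Y)) q0 * ps (pt Y) q0 \<noteq> 0"
        by (rule alg3[OF s1[OF q0] sc0 s_b2[OF q0] hsss0 nz])
      then show ?thesis using q0(1) by (simp add: q0_def inner2 CX CY)
    qed
    have nps: "(norm (ps (pt \<gamma>) (t0, s0)))\<^sup>2 > 0" using nz0 by simp
    have Lne: "L \<noteq> 0" using inner_ne nps L_formula by simp
    have Lsign: "(inner (ps (ps (ps \<gamma>)) (t0, s0)) (ps (pt \<gamma>) (t0, s0)) > 0 \<longrightarrow> L < 0)
       \<and> (inner (ps (ps (ps \<gamma>)) (t0, s0)) (ps (pt \<gamma>) (t0, s0)) < 0 \<longrightarrow> L > 0)"
      using nps unfolding L_formula by (auto simp: divide_pos_pos divide_neg_pos)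
    obtain d where d: "d > 0" "ball s0 d \<subseteq> I"
      and dprop: "\<And>s. s \<noteq> s0 \<and> \<bar>s - s0\<bar> < d \<Longrightarrow> P s \<noteq> 0 \<and> (L < 0 \<longrightarrow> T s < T s0) \<and> (L > 0 \<longrightarrow> T s > T s0)"
      using local_extr[OF openI s0I DT' P0 DP[OF s0I, unfolded q0T, folded L_def] Lne] by blast
    define \<delta>' where "\<delta>' = min \<delta> d"
    have \<delta>': "0 < \<delta>'" "\<delta>' \<le> \<delta>" using \<delta> d by (auto simp: \<delta>'_def)
    define I' where "I' = {s0 - \<delta>' <..< s0 + \<delta>'}"
    have I'I: "I' \<subseteq> I" using \<delta>' by (auto simp: I'_def I_def)
    have I'd: "s \<noteq> s0 \<and> \<bar>s - s0\<bar> < d" if "s \<in> I'" "s \<noteq> s0" for s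
      using that by (auto simp: I'_def \<delta>'_def abs_less_iff)
    have slice: "slice_cusp \<gamma> (T s) s" if "s \<in> I'" "s \<noteq> s0" for s
    proof -
      have sI: "s \<in> I" using that I'I by auto
      define q where "q = (T s, s)"
      have q: "q \<in> \<Omega>" "ps X q = 0" "ps Y q = 0" "q \<in> W" using curveO curve_sing curveW sI by (auto simp: q_def)
      have Pne: "P s \<noteq> 0" using dprop[OF I'd[OF that]] by simp
      have pshne: "ps (ps X) q * pt Y q - ps (ps Y) q * pt X q \<noteq> 0"
        using Pne psh_s[OF q(1-3)] by (simp add: P_def \<Phi>_def q_def[symmetric])
      have pthne: "ps (pt X) q * pt Y q - ps (pt Y) q * pt X q \<noteq> 0"
        using hW[OF q(4)] pth_s[OF q(1-3)] by simp
      show ?thesis unfolding slice_cusp_def lin_indep2_def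
      proof (intro conjI allI impI)
        show "ps \<gamma> (T s, s) = 0" using psg0[OF sI] .
        fix \<alpha> \<beta> assume ab: "\<alpha> *\<^sub>R ps (ps \<gamma>) (T s, s) + \<beta> *\<^sub>R ps (ps (ps \<gamma>)) (T s, s) = 0"
        have c1: "\<alpha> * ps (ps X) q + \<beta> * ps (ps (ps X)) q = 0" and c2: "\<alpha> * ps (ps Y) q + \<beta> * ps (ps (ps Y)) q = 0"
          using ab q(1) by (auto simp: vec2_eq CX CY q_def)
        from alg4[OF s1[OF q(1-3)] s_b[OF q(1-3)] s_b2[OF q(1-3)] s_c[OF q(1-3)] pshne pthne c1 c2]
        show "\<alpha> = 0" "\<beta> = 0" by auto
      qed
    qed
    define Gv where "Gv s = pt \<gamma> (T s, s)" for s
    define R1 where "R1 p = pt (pt X) p * \<Phi> p + ps (pt X) p" for p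
    define R2 where "R2 p = pt (pt Y) p * \<Phi> p + ps (pt Y) p" for p
    have cR1: "Cinf W R1" unfolding R1_def by (intro Cinf_add[OF W] Cinf_mult[OF W] Cinf_pt Cinf_ps c\<Phi> cXW)
    have cR2: "Cinf W R2" unfolding R2_def by (intro Cinf_add[OF W] Cinf_mult[OF W] Cinf_pt Cinf_ps c\<Phi> cYW)
    define G1v where "G1v s = R1 (T s, s) *\<^sub>R (axis 1 1 :: real^2) + R2 (T s, s) *\<^sub>R axis 2 1" for s
    have DG: "(Gv has_vector_derivative G1v s) (at s)" if "s \<in> I" for s
    proof -
      have d1: "((\<lambda>s. pt X (T s, s)) has_real_derivative R1 (T s, s)) (at s)"
        using Cinf_chain_T[OF W Cinf_pt[OF cXW] curveW[OF that] DT[OF that]] by (simp add: R1_def)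
      have d2: "((\<lambda>s. pt Y (T s, s)) has_real_derivative R2 (T s, s)) (at s)"
        using Cinf_chain_T[OF W Cinf_pt[OF cYW] curveW[OF that] DT[OF that]] by (simp add: R2_def)
      have d1': "((\<lambda>s. Gv s $ 1) has_real_derivative R1 (T s, s)) (at s)"
        by (rule has_field_derivative_transform_within_open[OF d1 openI that]) (use CX curveO in \<open>simp add: Gv_def\<close>)
      have d2': "((\<lambda>s. Gv s $ 2) has_real_derivative R2 (T s, s)) (at s)"
        by (rule has_field_derivative_transform_within_open[OF d2 openI that]) (use CY curveO in \<open>simp add: Gv_def\<close>)
      show ?thesis using vec2_hvd[OF d1' d2'] by (simp add: G1v_def)
    qed
    have vdc': "vd (\<lambda>s. (T s, \<gamma> (T s, s))) s = (P s, P s *\<^sub>R Gv s)" if "s \<in> I" for s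
      using vdc[OF that] by (simp add: P_def Gv_def)
    have Dc1: "((\<lambda>s. (P s, P s *\<^sub>R Gv s)) has_vector_derivative (Q1 (T s, s), P s *\<^sub>R G1v s + Q1 (T s, s) *\<^sub>R Gv s)) (at s)"
      if "s \<in> I" for s
      using has_vector_derivative_Pair[OF DP[OF that, unfolded has_real_derivative_iff_has_vector_derivative]
          has_vector_derivative_scaleR[OF DP[OF that] DG[OF that]]] .
    have vdc2: "vd (vd (\<lambda>s. (T s, \<gamma> (T s, s)))) s = (Q1 (T s, s), P s *\<^sub>R G1v s + Q1 (T s, s) *\<^sub>R Gv s)" if "s \<in> I" for s
    proof -
      have "vd (vd (\<lambda>s. (T s, \<gamma> (T s, s)))) s = vd (\<lambda>s. (P s, P s *\<^sub>R Gv s)) s"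
        by (rule vd_cong[OF openI that vdc'])
      also have "\<dots> = (Q1 (T s, s), P s *\<^sub>R G1v s + Q1 (T s, s) *\<^sub>R Gv s)" by (rule vd_eqI[OF Dc1[OF that]])
      finally show ?thesis .
    qed
    define Q2 where "Q2 = pt Q1 q0 * \<Phi> q0 + ps Q1 q0"
    have DQ1: "((\<lambda>s. Q1 (T s, s)) has_real_derivative Q2) (at s0)"
      using Cinf_chain_T[OF W cQ1 curveW[OF s0I] DT[OF s0I]] by (simp add: Q2_def q0T)
    obtain G2 where DG1: "(G1v has_vector_derivative G2) (at s0)"
    proof -
      have a: "((\<lambda>s. R1 (T s, s)) has_vector_derivative (pt R1 q0 * \<Phi> q0 + ps R1 q0)) (at s0)"
        using Cinf_chain_T[OF W cR1 curveW[OF s0I] DT[OF s0I]] by (simp add: q0T has_real_derivative_iff_has_vector_derivative)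
      have b: "((\<lambda>s. R2 (T s, s)) has_vector_derivative (pt R2 q0 * \<Phi> q0 + ps R2 q0)) (at s0)"
        using Cinf_chain_T[OF W cR2 curveW[OF s0I] DT[OF s0I]] by (simp add: q0T has_real_derivative_iff_has_vector_derivative)
      have "(G1v has_vector_derivative (pt R1 q0 * \<Phi> q0 + ps R1 q0) *\<^sub>R (axis 1 1 :: real^2) + (pt R2 q0 * \<Phi> q0 + ps R2 q0) *\<^sub>R axis 2 1) (at s0)"
        unfolding G1v_def by (rule has_vector_derivative_add[OF has_vector_derivative_scaleR_left[OF a] has_vector_derivative_scaleR_left[OF b]])
      then show ?thesis using that by blast
    qed
    have Gv0: "Gv s0 = pt \<gamma> q0" by (simp add: Gv_def q0T)
    have \<Phi>0: "\<Phi> q0 = 0" using P0 by (simp add: P_def q0T)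
    have G1v0: "G1v s0 = ps (pt \<gamma>) q0"
      using \<Phi>0 q0(1) CX CY by (simp add: G1v_def R1_def R2_def q0T vec2_eq)
    have DP0: "(P has_real_derivative L) (at s0)" using DP[OF s0I] by (simp add: q0T L_def)
    have Dc2: "((\<lambda>s. (Q1 (T s, s), P s *\<^sub>R G1v s + Q1 (T s, s) *\<^sub>R Gv s)) has_vector_derivative
        (Q2, (P s0 *\<^sub>R G2 + L *\<^sub>R G1v s0) + (Q1 (T s0, s0) *\<^sub>R G1v s0 + Q2 *\<^sub>R Gv s0))) (at s0)"
      using has_vector_derivative_Pair[OF DQ1[unfolded has_real_derivative_iff_has_vector_derivative]
          has_vector_derivative_add[OF has_vector_derivative_scaleR[OF DP0 DG1] has_vector_derivative_scaleR[OF DQ1 DG[OF s0I]]]] .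
    have vdc3: "vd (vd (vd (\<lambda>s. (T s, \<gamma> (T s, s))))) s0 = (Q2, (2 * L) *\<^sub>R ps (pt \<gamma>) q0 + Q2 *\<^sub>R pt \<gamma> q0)"
    proof -
      have "vd (vd (vd (\<lambda>s. (T s, \<gamma> (T s, s))))) s0 = vd (\<lambda>s. (Q1 (T s, s), P s *\<^sub>R G1v s + Q1 (T s, s) *\<^sub>R Gv s)) s0"
        by (rule vd_cong[OF openI s0I vdc2])
      also have "\<dots> = (Q2, (P s0 *\<^sub>R G2 + L *\<^sub>R G1v s0) + (Q1 (T s0, s0) *\<^sub>R G1v s0 + Q2 *\<^sub>R Gv s0))"
        by (rule vd_eqI[OF Dc2])
      also have "\<dots> = (Q2, L *\<^sub>R ps (pt \<gamma>) q0 + (L *\<^sub>R ps (pt \<gamma>) q0 + Q2 *\<^sub>R pt \<gamma> q0))"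
        using P0 G1v0 Gv0 by (simp add: q0T L_def[symmetric])
      also have "L *\<^sub>R ps (pt \<gamma>) q0 + (L *\<^sub>R ps (pt \<gamma>) q0 + Q2 *\<^sub>R pt \<gamma> q0) = (2 * L) *\<^sub>R ps (pt \<gamma>) q0 + Q2 *\<^sub>R pt \<gamma> q0"
      proof -
        have "(2 * L) *\<^sub>R ps (pt \<gamma>) q0 = L *\<^sub>R ps (pt \<gamma>) q0 + L *\<^sub>R ps (pt \<gamma>) q0"
          by (simp add: scaleR_add_left[symmetric])
        then show ?thesis by (simp add: add.assoc)
      qed
      finally show ?thesis .
    qed
    have vdc2_0: "vd (vd (\<lambda>s. (T s, \<gamma> (T s, s)))) s0 = (L, L *\<^sub>R pt \<gamma> q0)"
      using vdc2[OF s0I] P0 Gv0 by (simp add: q0T L_def)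
    have vdc1_0: "vd (\<lambda>s. (T s, \<gamma> (T s, s))) s0 = 0"
      using vdc'[OF s0I] P0 by (simp add: zero_prod_def)
    have cusp: "curve_cusp (\<lambda>s. (T s, \<gamma> (T s, s))) s0"
      unfolding curve_cusp_def lin_indep2_def vdc1_0 vdc2_0 vdc3
    proof (intro conjI allI impI refl)
      fix \<alpha> \<beta> assume ab: "\<alpha> *\<^sub>R (L, L *\<^sub>R pt \<gamma> q0) + \<beta> *\<^sub>R (Q2, (2 * L) *\<^sub>R ps (pt \<gamma>) q0 + Q2 *\<^sub>R pt \<gamma> q0) = 0"
      then have f: "\<alpha> * L + \<beta> * Q2 = 0" and s: "(\<alpha> * L) *\<^sub>R pt \<gamma> q0 + \<beta> *\<^sub>R ((2 * L) *\<^sub>R ps (pt \<gamma>) q0 + Q2 *\<^sub>R pt \<gamma> q0) = 0"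
        by (simp_all add: zero_prod_def)
      have "(\<alpha> * L + \<beta> * Q2) *\<^sub>R pt \<gamma> q0 + (2 * \<beta> * L) *\<^sub>R ps (pt \<gamma>) q0 = 0"
        using s by (simp add: algebra_simps scaleR_add_left)
      then have "(2 * \<beta> * L) *\<^sub>R ps (pt \<gamma>) q0 = 0" using f by simp
      then have b: "\<beta> = 0" using Lne nz0 by (simp add: q0_def)
      then show "\<beta> = 0" .
      show "\<alpha> = 0" using f b Lne by simp
    qed
    show ?thesis
    proof (rule exI[of _ \<epsilon>], rule conjI[OF \<epsilon>], rule exI[of _ \<delta>'], rule conjI[OF \<delta>'(1)], rule exI[of _ T])
      have X1: "\<forall>s\<in>{s0 - \<delta>' <..< s0 + \<delta>'}. s \<noteq> s0 \<longrightarrow> slice_cusp \<gamma> (T s) s" using slice by (simp add: I'_def)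
      have X2: "inner (ps (ps (ps \<gamma>)) (t0, s0)) (ps (pt \<gamma>) (t0, s0)) > 0 \<longrightarrow> (\<forall>s\<in>{s0 - \<delta>' <..< s0 + \<delta>'}. s \<noteq> s0 \<longrightarrow> T s < t0)"
        using Lsign dprop I'd Ts0 by (auto simp: I'_def)
      have X3: "inner (ps (ps (ps \<gamma>)) (t0, s0)) (ps (pt \<gamma>) (t0, s0)) < 0 \<longrightarrow> (\<forall>s\<in>{s0 - \<delta>' <..< s0 + \<delta>'}. s \<noteq> s0 \<longrightarrow> T s > t0)"
        using Lsign dprop I'd Ts0 by (auto simp: I'_def)
      have X4: "\<forall>s\<in>{s0 - \<delta>' <..< s0 + \<delta>'}. s \<noteq> s0 \<longrightarrow> vd (\<lambda>s. (T s, \<gamma> (T s, s))) s \<noteq> 0"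
      proof (intro ballI impI)
        fix s assume s: "s \<in> {s0 - \<delta>' <..< s0 + \<delta>'}" "s \<noteq> s0"
        then have "P s \<noteq> 0" using dprop I'd by (auto simp: I'_def)
        then show "vd (\<lambda>s. (T s, \<gamma> (T s, s))) s \<noteq> 0" using vdc' s I'I by (auto simp: I'_def zero_prod_def)
      qed
      show "let I = {s0 - \<delta>' <..< s0 + \<delta>'}; c = \<lambda>s. (T s, \<gamma> (T s, s)) in
       {t0 - \<epsilon> <..< t0 + \<epsilon>} \<times> I \<subseteq> \<Omega>
     \<and> smooth1_on I T \<and> T s0 = t0 \<and> (\<forall>s\<in>I. \<bar>T s - t0\<bar> < \<epsilon>)
     \<and> (\<forall>s\<in>I. vd T s = - inner (ps (ps \<gamma>) (T s, s)) (ps (pt \<gamma>) (T s, s))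
                          / (norm (ps (pt \<gamma>) (T s, s)))\<^sup>2)
     \<and> (\<forall>t s. \<bar>t - t0\<bar> < \<epsilon> \<and> s \<in> I \<longrightarrow> (ps \<gamma> (t, s) = 0 \<longleftrightarrow> t = T s))
     \<and> smooth1_on I c \<and> (\<forall>s\<in>I. mink (vd c s) = 0)
     \<and> (ps (ps \<gamma>) (t0, s0) = 0 \<and> ps (ps (ps \<gamma>)) (t0, s0) \<noteq> 0 \<longrightarrow>
          (\<forall>s\<in>I. s \<noteq> s0 \<longrightarrow> slice_cusp \<gamma> (T s) s)
        \<and> (inner (ps (ps (ps \<gamma>)) (t0, s0)) (ps (pt \<gamma>) (t0, s0)) > 0 \<longrightarrow>
             (\<forall>s\<in>I. s \<noteq> s0 \<longrightarrow> T s < t0))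
        \<and> (inner (ps (ps (ps \<gamma>)) (t0, s0)) (ps (pt \<gamma>) (t0, s0)) < 0 \<longrightarrow>
             (\<forall>s\<in>I. s \<noteq> s0 \<longrightarrow> T s > t0))
        \<and> (\<forall>s\<in>I. s \<noteq> s0 \<longrightarrow> vd c s \<noteq> 0)
        \<and> curve_cusp c s0)"
        unfolding Let_def using basic[OF \<delta>'] X1 X2 X3 X4 cusp by blast
    qed
  qed
qed


end
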